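(* Let $W$ be a Coxeter group with simple generators $s_1,\dots,s_n$ and let $c$ be a Coxeter element. Suppose $x_1\cdots x_N$ is $c$-admissible and $s_{x_1}\cdots s_{x_N}$ is a reduced word. For $1\le i\le N$ let $t_i=s_{x_1}\cdots s_{x_{i-1}}s_{x_i}s_{x_{i-1}}\cdots s_{x_1}$. Then for all $i<j$ we have $\omega_c(\alpha_{t_i},\alpha_{t_j})\le 0$, and if $\omega_c(\alpha_{t_i},\alpha_{t_j})=0$ then $t_i$ and $t_j$ commute.
   Context: $W$ is a Coxeter group of finite rank $n$: generated by $s_1,\dots,s_n$ with $s_i^2=1$, $(s_is_j)^{m_{ij}}=1$ for $i\ne j$, $2\le m_{ij}=m_{ji}\le\infty$. Let $V$ be the real vector space with basis $\alpha_1,\dots,\alpha_n$ and symmetric bilinear form $B$ with $B(\alpha_i,\alpha_i)=2$, $B(\alpha_i,\alpha_j)=-2\cos(\pi/m_{ij})$ for $i\ne j$; $W$ acts by $s_i v=v-B(v,\alpha_i)\alpha_i$. Roots are the vectors $w\alpha_i$; each is positive (nonnegative combination of the $\alpha_i$) or negative. Reflections (conjugates of simple generators) are in bijection with positive roots via $w\alpha_i\leftrightarrow ws_iw^{-1}$; $\alpha_t$ denotes the positive root of the reflection $t$. A Coxeter element is $c=s_{y_1}\cdots s_{y_n}$ with $y$ a permutation of $\{1,\dots,n\}$; the skew-symmetric bilinear form $\omega_c$ on $V$ is defined by $\omega_c(\alpha_{y_i},\alpha_{y_j})=B(\alpha_{y_i},\alpha_{y_j})$ for $i<j$, $\omega_c(\alpha_{y_i},\alpha_{y_j})=-B(\alpha_{y_i},\alpha_{y_j})$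 for $i>j$, $\omega_c(\alpha_k,\alpha_k)=0$ (independent of the chosen expression of $c$). A vertex $x$ is initial in $c$ if $c$ has such an expression with $y_1=x$; then $s_xcs_x$ is a Coxeter element. A sequence $x_1,\dots,x_N$ is $c$-admissible if, with $c_0=c$, $c_k=s_{x_k}c_{k-1}s_{x_k}$, each $x_k$ is initial in $c_{k-1}$. *)

theory Defs
  imports Complex_Main "HOL-Library.Extended_Nat"
begin

text \<open>Elements of W are represented by
  words (lists of generator indices); equality in W is the congruence generated by
  the defining relators of the presentation.\<close>

definition coxeter_matrix :: "nat \<Rightarrow> (nat \<Rightarrow> nat \<Rightarrow> enat) \<Rightarrow> bool" where
  "coxeter_matrix n m \<longleftrightarrow>
     (\<forall>i<n. \<forall>j<n. i \<noteq> j \<longrightarrow> m i j = m j i \<and> 2 \<le> m i j)"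

inductive relator :: "nat \<Rightarrow> (nat \<Rightarrow> nat \<Rightarrow> enat) \<Rightarrow> nat list \<Rightarrow> bool"
  for n m where
  sq: "i < n \<Longrightarrow> relator n m [i, i]"
| braid: "i < n \<Longrightarrow> j < n \<Longrightarrow> i \<noteq> j \<Longrightarrow> m i j = enat k \<Longrightarrow>
          relator n m (concat (replicate k [i, j]))"

text \<open>Equality in W of two words: the congruence on the free monoid generated by
  the relators (the monoid quotient is the group W since all s_i are involutions).\<close>
inductive coxeq :: "nat \<Rightarrow> (nat \<Rightarrow> nat \<Rightarrow> enat) \<Rightarrow> nat list \<Rightarrow> nat list \<Rightarrow> bool"
  for n m where
  refl: "coxeq n m u u"
| sym: "coxeq n m u v \<Longrightarrow> coxeq n m v u"
| trans: "coxeq n m u v \<Longrightarrow> coxeq n m v w \<Longrightarrow> coxeq n m u w"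
| rel: "relator n m r \<Longrightarrow> coxeq n m (u @ r @ v) (u @ v)"

definition reduced_word :: "nat \<Rightarrow> (nat \<Rightarrow> nat \<Rightarrow> enat) \<Rightarrow> nat list \<Rightarrow> bool" where
  "reduced_word n m w \<longleftrightarrow> (\<forall>v. coxeq n m v w \<longrightarrow> length w \<le> length v)"

text \<open>Geometric representation: V = functions nat => real, coordinates w.r.t. the
  simple roots alpha_0..alpha_(n-1) (only coordinates < n matter).\<close>

definition Bmat :: "(nat \<Rightarrow> nat \<Rightarrow> enat) \<Rightarrow> nat \<Rightarrow> nat \<Rightarrow> real" where
  "Bmat m i j = (if i = j then 2 else
      (case m i j of enat k \<Rightarrow> - 2 * cos (pi / real k) | \<infinity> \<Rightarrow> - 2))"

definition Bform :: "nat \<Rightarrow> (nat \<Rightarrow> nat \<Rightarrow> enat) \<Rightarrow> (nat \<Rightarrow> real) \<Rightarrow> (nat \<Rightarrow> real) \<Rightarrow> real" where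
  "Bform n m u v = (\<Sum>i<n. \<Sum>j<n. u i * v j * Bmat m i j)"

definition simple_root :: "nat \<Rightarrow> nat \<Rightarrow> real" where
  "simple_root k = (\<lambda>i. if i = k then 1 else 0)"

definition sref :: "nat \<Rightarrow> (nat \<Rightarrow> nat \<Rightarrow> enat) \<Rightarrow> nat \<Rightarrow> (nat \<Rightarrow> real) \<Rightarrow> (nat \<Rightarrow> real)" where
  "sref n m i v = (\<lambda>k. v k - Bform n m v (simple_root i) * simple_root i k)"

definition act :: "nat \<Rightarrow> (nat \<Rightarrow> nat \<Rightarrow> enat) \<Rightarrow> nat list \<Rightarrow> (nat \<Rightarrow> real) \<Rightarrow> (nat \<Rightarrow> real)" where
  "act n m w v = foldr (sref n m) w v"

definition root_of :: "nat \<Rightarrow> (nat \<Rightarrow> nat \<Rightarrow> enat) \<Rightarrow> nat list \<Rightarrow> (nat \<Rightarrow> real)" where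
  "root_of n m t = (THE \<beta>. (\<forall>i<n. 0 \<le> \<beta> i) \<and>
      (\<exists>w k. k < n \<and> set w \<subseteq> {..<n} \<and> \<beta> = act n m w (simple_root k) \<and>
             coxeq n m (w @ [k] @ rev w) t))"

definition coxeter_word :: "nat \<Rightarrow> nat list \<Rightarrow> bool" where
  "coxeter_word n y \<longleftrightarrow> distinct y \<and> set y = {..<n}"

definition is_initial :: "nat \<Rightarrow> (nat \<Rightarrow> nat \<Rightarrow> enat) \<Rightarrow> nat list \<Rightarrow> nat \<Rightarrow> bool" where
  "is_initial n m c x \<longleftrightarrow>
     (\<exists>y. coxeter_word n y \<and> y \<noteq> [] \<and> hd y = x \<and> coxeq n m y c)"

fun admissible :: "nat \<Rightarrow> (nat \<Rightarrow> nat \<Rightarrow> enat) \<Rightarrow> nat list \<Rightarrow> nat list \<Rightarrow> bool" where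
  "admissible n m c [] = True"
| "admissible n m c (x # xs) =
     (is_initial n m c x \<and> admissible n m ([x] @ c @ [x]) xs)"

text \<open>omega_c for c = s_(y1) ... s_(yn), extended bilinearly.\<close>
definition before :: "nat list \<Rightarrow> nat \<Rightarrow> nat \<Rightarrow> bool" where
  "before y a b \<longleftrightarrow> (\<exists>p q. p < q \<and> q < length y \<and> y ! p = a \<and> y ! q = b)"

definition omega_simple :: "(nat \<Rightarrow> nat \<Rightarrow> enat) \<Rightarrow> nat list \<Rightarrow> nat \<Rightarrow> nat \<Rightarrow> real" where
  "omega_simple m y a b =
     (if before y a b then Bmat m a b else if before y b a then - Bmat m a b else 0)"

definition omega :: "nat \<Rightarrow> (nat \<Rightarrow> nat \<Rightarrow> enat) \<Rightarrow> nat list \<Rightarrow> (nat \<Rightarrow> real) \<Rightarrow> (nat \<Rightarrow> real) \<Rightarrow> real" where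
  "omega n m y u v = (\<Sum>a<n. \<Sum>b<n. u a * v b * omega_simple m y a b)"

text \<open>The reflection t_i (0-indexed) of a word xs:
  s_(x_0)...s_(x_(i-1)) s_(x_i) s_(x_(i-1)) ... s_(x_0).\<close>
definition refl_word :: "nat list \<Rightarrow> nat \<Rightarrow> nat list" where
  "refl_word xs i = take i xs @ [xs ! i] @ rev (take i xs)"

end

theory Submission
  imports Defs
begin

locale cox =
  fixes n :: nat and m :: "nat \<Rightarrow> nat \<Rightarrow> enat"
  assumes cm: "coxeter_matrix n m"
begin

abbreviation "e \<equiv> simple_root"
abbreviation "B \<equiv> Bform n m"
abbreviation "sr \<equiv> sref n m"
abbreviation "ac \<equiv> act n m"
abbreviation "ceq \<equiv> coxeq n m"

lemma m_sym: "a < n \<Longrightarrow> b < n \<Longrightarrow> a \<noteq> b \<Longrightarrow> m a b = m b a"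
  using cm unfolding coxeter_matrix_def by auto

lemma m_ge2: "a < n \<Longrightarrow> b < n \<Longrightarrow> a \<noteq> b \<Longrightarrow> 2 \<le> m a b"
  using cm unfolding coxeter_matrix_def by auto

lemma Bmat_diag[simp]: "Bmat m a a = 2" by (simp add: Bmat_def)

lemma Bmat_sym: "a < n \<Longrightarrow> b < n \<Longrightarrow> Bmat m a b = Bmat m b a"
  by (cases "a = b") (auto simp: Bmat_def m_sym)

lemma Bmat_nonpos: assumes "a < n" "b < n" "a \<noteq> b" shows "Bmat m a b \<le> 0"
proof (cases "m a b")
  case (enat k)
  with m_ge2[OF assms] have k: "2 \<le> k" by (simp add: numeral_eq_enat)
  have k0: "0 \<le> pi / real k" by simp
  have "pi / real k \<le> pi / 2" using k by (intro divide_left_mono) auto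
  then have "0 \<le> cos (pi / real k)"
    using k0 pi_gt_zero by (intro cos_ge_zero) linarith+
  then show ?thesis using enat assms(3) by (simp add: Bmat_def)
next
  case infinity then show ?thesis using assms(3) by (simp add: Bmat_def)
qed

lemma e_same[simp]: "e k k = 1" and e_diff[simp]: "i \<noteq> k \<Longrightarrow> e k i = 0"
  by (auto simp: simple_root_def)

lemma delta_sum: "k < n \<Longrightarrow> (\<Sum>j<n. (f::nat\<Rightarrow>real) j * (if j = k then 1 else 0) * g j) = f k * g k"
proof -
  assume k: "k < n"
  have "(\<Sum>j<n. f j * (if j = k then 1 else 0) * g j) = (\<Sum>j<n. if j = k then f j * g j else 0)"
    by (rule sum.cong) auto
  then show ?thesis using k by simp
qed

lemma delta_sum2: "k < n \<Longrightarrow> (\<Sum>j<n. (if j = k then 1 else 0) * (f::nat\<Rightarrow>real) j) = f k"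
proof -
  assume k: "k < n"
  have "(\<Sum>j<n. (if j = k then 1 else 0) * f j) = (\<Sum>j<n. if j = k then f j else 0)"
    by (rule sum.cong) auto
  then show ?thesis using k by simp
qed

lemma B_e_right: "k < n \<Longrightarrow> B u (e k) = (\<Sum>i<n. u i * Bmat m i k)"
  unfolding Bform_def simple_root_def
  by (simp add: delta_sum)

lemma B_e_left: "k < n \<Longrightarrow> B (e k) v = (\<Sum>j<n. v j * Bmat m k j)"
proof -
  assume k: "k < n"
  have "B (e k) v = (\<Sum>i<n. (if i = k then 1 else 0) * (\<Sum>j<n. v j * Bmat m i j))"
    unfolding Bform_def simple_root_def
    by (simp add: sum_distrib_left mult.assoc)
  then show ?thesis using k by (simp only: delta_sum2)
qed

lemma B_sym: "B u v = B v u"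
  unfolding Bform_def
  by (subst sum.swap) (auto intro!: sum.cong simp: Bmat_sym mult.commute)

lemma B_lin_left: "B (\<lambda>i. p * u i + q * w i) v = p * B u v + q * B w v"
  unfolding Bform_def by (simp add: algebra_simps sum.distrib sum_distrib_left)

lemma B_lin_right: "B v (\<lambda>i. p * u i + q * w i) = p * B v u + q * B v w"
  using B_lin_left B_sym by metis

lemma B_ee: "a < n \<Longrightarrow> b < n \<Longrightarrow> B (e a) (e b) = Bmat m a b"
  by (simp add: B_e_right) (simp add: simple_root_def delta_sum2)

lemma sr_alt: "sr i v = (\<lambda>k. 1 * v k + (- B v (e i)) * e i k)"
  by (simp add: sref_def)

lemma sr_coord: "k \<noteq> i \<Longrightarrow> sr i v k = v k"
  by (simp add: sref_def)

lemma sr_lin: "sr i (\<lambda>k. p * x k + q * y k) = (\<lambda>k. p * sr i x k + q * sr i y k)"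
  by (auto simp: sref_def B_lin_left algebra_simps)

lemma sr_B: "i < n \<Longrightarrow> B (sr i v) (e i) = - B v (e i)"
proof -
  assume i: "i < n"
  have "B (sr i v) (e i) = 1 * B v (e i) + (- B v (e i)) * B (e i) (e i)"
    by (subst sr_alt, rule B_lin_left)
  also have "\<dots> = - B v (e i)" using i by (simp add: B_ee)
  finally show ?thesis .
qed

lemma sr_sr[simp]: "i < n \<Longrightarrow> sr i (sr i v) = v"
  using sr_B by (auto simp: sref_def algebra_simps)

lemma sr_fix: "B v (e i) = 0 \<Longrightarrow> sr i v = v"
  by (simp add: sref_def)

lemma sr_inv: assumes "i < n" shows "B (sr i u) (sr i v) = B u v"
proof -
  let ?p = "B u (e i)" and ?q = "B v (e i)"
  have "B (sr i u) (sr i v) = 1 * B u (sr i v) + (- ?p) * B (e i) (sr i v)"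
    by (subst sr_alt, rule B_lin_left)
  also have "B u (sr i v) = 1 * B u v + (-?q) * B u (e i)"
    by (subst sr_alt, rule B_lin_right)
  also have "B (e i) (sr i v) = 1 * B (e i) v + (-?q) * B (e i) (e i)"
    by (subst sr_alt, rule B_lin_right)
  finally show ?thesis using assms by (simp add: B_ee B_sym[of "e i" v] algebra_simps)
qed

lemma act_Nil[simp]: "ac [] v = v" by (simp add: act_def)
lemma act_Cons[simp]: "ac (i # w) v = sr i (ac w v)" by (simp add: act_def)
lemma act_append: "ac (u @ w) v = ac u (ac w v)" by (simp add: act_def)

lemma act_lin: "ac w (\<lambda>k. p * x k + q * y k) = (\<lambda>k. p * ac w x k + q * ac w y k)"
  by (induction w) (simp_all add: sr_lin)

lemma act_coord: "k \<notin> set w \<Longrightarrow> ac w v k = v k"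
  by (induction w) (auto simp: sr_coord)

lemma act_rev_cancel: "set w \<subseteq> {..<n} \<Longrightarrow> ac w (ac (rev w) x) = x"
  by (induction w arbitrary: x) (auto simp: act_append)

lemma act_rev_cancel2: "set w \<subseteq> {..<n} \<Longrightarrow> ac (rev w) (ac w x) = x"
  using act_rev_cancel[of "rev w"] by simp

lemma act_inv: "set w \<subseteq> {..<n} \<Longrightarrow> B (ac w u) (ac w v) = B u v"
  by (induction w) (auto simp: sr_inv)

lemma act_fix2: "set w \<subseteq> {a, b} \<Longrightarrow> B z (e a) = 0 \<Longrightarrow> B z (e b) = 0 \<Longrightarrow> ac w z = z"
  by (induction w) (auto simp: sr_fix)

end

fun useq :: "real \<Rightarrow> nat \<Rightarrow> real" where
  "useq c 0 = 0"
| "useq c (Suc 0) = 1"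
| "useq c (Suc (Suc k)) = 2 * c * useq c (Suc k) - useq c k"

lemma useq_sin: "useq (cos t) k * sin t = sin (real k * t)"
proof (induction "cos t" k rule: useq.induct)
  case (3 k)
  have e1: "sin (real (Suc (Suc k)) * t) = sin (real (Suc k) * t + t)"
    by (simp add: algebra_simps)
  have e2: "sin (real k * t) = sin (real (Suc k) * t - t)"
    by (simp add: algebra_simps)
  have "useq (cos t) (Suc (Suc k)) * sin t
      = 2 * cos t * (useq (cos t) (Suc k) * sin t) - useq (cos t) k * sin t"
    by (simp add: algebra_simps)
  also have "\<dots> = 2 * cos t * sin (real (Suc k) * t) - sin (real k * t)"
    using 3 by simp
  also have "\<dots> = sin (real (Suc (Suc k)) * t)"
    unfolding e1 e2 sin_add sin_diff by (simp add: algebra_simps)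
  finally show ?case .
qed simp_all

lemma useq_one: "useq 1 k = real k"
  by (induction "1::real" k rule: useq.induct) simp_all

lemma concat_rep_comm: "concat (replicate K xs) @ xs = xs @ concat (replicate K xs)"
  by (induction K) simp_all

lemma rev_rep: "rev (concat (replicate K [a, b])) = concat (replicate K [b, a])"
proof (induction K)
  case (Suc K)
  then show ?case using concat_rep_comm[of K "[b,a]"] by simp
qed simp

lemma rep_props: "a \<noteq> b \<Longrightarrow> successively (\<noteq>) (concat (replicate K [a, b])) \<and>
   (0 < K \<longrightarrow> hd (concat (replicate K [a, b])) = a \<and> last (concat (replicate K [a, b])) = b)"
proof (induction K)
  case (Suc K)
  then show ?case by (cases K) auto
qed simp

lemma rep_set: "set (concat (replicate K [a, b])) \<subseteq> {a, b}"
  by (induction K) auto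

lemma rep_len: "length (concat (replicate K [a, b])) = 2 * K"
  by (induction K) auto

context cox
begin

definition cval :: "nat \<Rightarrow> nat \<Rightarrow> real" where "cval a b = - Bmat m a b / 2"

lemma cval_sym: "a < n \<Longrightarrow> b < n \<Longrightarrow> cval a b = cval b a"
  by (simp add: cval_def Bmat_sym)

lemma cval_self[simp]: "cval a a = -1" by (simp add: cval_def)

lemma sr_e_other: "a < n \<Longrightarrow> b < n \<Longrightarrow> sr a (e b) = (\<lambda>k. e b k + 2 * cval a b * e a k)"
  by (auto simp: sref_def B_ee cval_def Bmat_sym)

lemma sr_e_self: "a < n \<Longrightarrow> sr a (e a) = (\<lambda>k. - e a k)"
  by (auto simp: sref_def B_ee)

lemma dihedral:
  assumes ab: "a < n" "b < n" "a \<noteq> b"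
  shows "set u \<subseteq> {a, b} \<Longrightarrow> successively (\<noteq>) u \<Longrightarrow> (u \<noteq> [] \<longrightarrow> last u = b) \<Longrightarrow>
    ac u (e a) = (\<lambda>k. useq (cval a b) (Suc (length u)) * e (if u = [] then a else hd u) k
        + useq (cval a b) (length u) * e (if (if u = [] then a else hd u) = a then b else a) k)"
proof (induction u)
  case Nil
  then show ?case by simp
next
  case (Cons x u')
  note IH0 = Cons.IH and P0 = Cons.prems
  show ?case
  proof (cases u')
    case Nil
    then have "x = b" using Cons.prems by simp
    then show ?thesis using Nil ab
      by (auto simp: sr_e_other cval_sym numeral_2_eq_2)
  next
    case (Cons y u'')
    note Cons2 = this
    have xy: "x \<noteq> y" "x \<in> {a,b}" "y \<in> {a,b}" using P0 Cons2 by auto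
    have IH: "ac u' (e a) = (\<lambda>k. useq (cval a b) (Suc (length u')) * e y k
        + useq (cval a b) (length u') * e x k)"
      using IH0 P0 Cons2 xy by auto
    have xn: "x < n" "y < n" using xy ab by auto
    have cv: "cval x y = cval a b" using xy ab cval_sym by auto
    have "ac (x # u') (e a) = sr x (\<lambda>k. useq (cval a b) (Suc (length u')) * e y k
        + useq (cval a b) (length u') * e x k)" using IH by simp
    also have "\<dots> = (\<lambda>k. useq (cval a b) (Suc (length u')) * (e y k + 2 * cval a b * e x k)
        + useq (cval a b) (length u') * (- e x k))"
      unfolding sr_lin using xn xy cv by (simp add: sr_e_other sr_e_self)
    also have "\<dots> = (\<lambda>k. useq (cval a b) (Suc (length (x # u'))) * e x k
        + useq (cval a b) (length (x # u')) * e y k)"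
      by (auto simp: algebra_simps)
    finally show ?thesis using xy by auto
  qed
qed

lemma braid_act:
  assumes ab: "a < n" "b < n" "a \<noteq> b" and K: "m a b = enat K"
  shows "ac (concat (replicate K [a, b])) x = x"
proof -
  have K2: "2 \<le> K" using m_ge2[OF ab] K by (simp add: numeral_eq_enat)
  define t where "t = pi / real K"
  have t0: "0 < t" "t < pi" using K2 by (auto simp: t_def field_simps)
  have st: "sin t > 0" using t0 by (simp add: sin_gt_zero)
  have ct: "cos t < 1" using t0 cos_monotone_0_pi[of 0 t] by simp
  have "t \<le> pi / 2" unfolding t_def using K2 by (intro divide_left_mono) auto
  then have ct0: "0 \<le> cos t" using t0 by (intro cos_ge_zero) linarith+
  have cv: "cval a b = cos t" using K ab by (simp add: cval_def Bmat_def t_def)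
  have cvba: "cval b a = cos t" using cv cval_sym ab by simp
  have U: "useq (cos t) j = sin (real j * t) / sin t" for j
    using useq_sin[of t j] st by (simp add: field_simps)
  have U0: "useq (cos t) (2 * K) = 0"
  proof -
    have h: "real (2 * K) * t = 2 * pi" using K2 by (simp add: t_def)
    have "sin (real (2 * K) * t) = 0" by (simp only: h) simp
    then show ?thesis by (simp only: U)
  qed
  have U1: "useq (cos t) (Suc (2 * K)) = 1"
  proof -
    have "real (Suc (2 * K)) * t = t + real 2 * pi" using K2 by (simp add: t_def algebra_simps)
    then show ?thesis using st by (simp add: U sin_add)
  qed
  have gen: "ac (concat (replicate K [p, q])) (e p) = e p"
    if pq: "p < n" "q < n" "p \<noteq> q" "cval p q = cos t" for p q
  proof -
    have pr: "successively (\<noteq>) (concat (replicate K [p, q]))"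
      "hd (concat (replicate K [p, q])) = p" "last (concat (replicate K [p, q])) = q"
      "concat (replicate K [p, q]) \<noteq> []"
      using rep_props[of p q K] pq K2 rep_len[of K p q] by auto
    show ?thesis
      using dihedral[OF pq(1-3), of "concat (replicate K [p, q])"] pr rep_set[of K p q]
      by (simp add: rep_len pq(4) U0 U1)
  qed
  define R where "R = concat (replicate K [a, b])"
  have Rset: "set R \<subseteq> {..<n}" using rep_set[of K a b] ab unfolding R_def by auto
  have Ra: "ac R (e a) = e a" using gen[of a b] ab cv unfolding R_def by simp
  have Rb: "ac R (e b) = e b"
  proof -
    have "ac (rev R) (e b) = e b" unfolding R_def rev_rep using gen[of b a] ab cvba by simp
    then have "ac R (ac (rev R) (e b)) = ac R (e b)" by simp
    then show ?thesis using act_rev_cancel[OF Rset] by simp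
  qed
  define A where "A = B x (e a)"
  define Bb where "Bb = B x (e b)"
  define D where "D = 2 * (1 - cos t * cos t)"
  have "cos t * cos t \<le> cos t * 1" by (rule mult_left_mono) (use ct ct0 in auto)
  then have D0: "D > 0" using ct unfolding D_def by simp
  define la where "la = (A + cos t * Bb) / D"
  define mu where "mu = (Bb + cos t * A) / D"
  define p where "p = (\<lambda>k. la * e a k + mu * e b k)"
  define z where "z = (\<lambda>k. 1 * x k + (-1) * p k)"
  have Baa: "B (e a) (e a) = 2" "B (e b) (e b) = 2" using ab by (simp_all add: B_ee)
  have Bab: "B (e a) (e b) = - 2 * cos t" "B (e b) (e a) = - 2 * cos t"
    using cv cvba ab by (simp_all add: B_ee cval_def)
  have key1: "2 * (A + cos t * Bb) - 2 * cos t * (Bb + cos t * A) = A * D"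
    unfolding D_def by (simp add: algebra_simps)
  have key2: "2 * (Bb + cos t * A) - 2 * cos t * (A + cos t * Bb) = Bb * D"
    unfolding D_def by (simp add: algebra_simps)
  have pa: "B p (e a) = A"
  proof -
    have "B p (e a) = la * 2 + mu * (- 2 * cos t)"
      unfolding p_def B_lin_left Baa Bab by simp
    also have "\<dots> = (2 * (A + cos t * Bb) - 2 * cos t * (Bb + cos t * A)) / D"
      unfolding la_def mu_def by (simp add: diff_divide_distrib add_divide_distrib algebra_simps)
    also have "\<dots> = A" unfolding key1 using D0 by simp
    finally show ?thesis .
  qed
  have pb: "B p (e b) = Bb"
  proof -
    have "B p (e b) = la * (- 2 * cos t) + mu * 2"
      unfolding p_def B_lin_left Baa Bab by simp
    also have "\<dots> = (2 * (Bb + cos t * A) - 2 * cos t * (A + cos t * Bb)) / D"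
      unfolding la_def mu_def by (simp add: diff_divide_distrib add_divide_distrib algebra_simps)
    also have "\<dots> = Bb" unfolding key2 using D0 by simp
    finally show ?thesis .
  qed
  have za: "B z (e a) = 0" unfolding z_def B_lin_left pa A_def by simp
  have zb: "B z (e b) = 0" unfolding z_def B_lin_left pb Bb_def by simp
  have Rz: "ac R z = z" using act_fix2[OF _ za zb] rep_set[of K a b] unfolding R_def by simp
  have Rp: "ac R p = p" unfolding p_def act_lin Ra Rb by simp
  have xz: "x = (\<lambda>k. 1 * p k + 1 * z k)" unfolding z_def by auto
  have "ac R x = (\<lambda>k. 1 * ac R p k + 1 * ac R z k)" by (subst xz, rule act_lin)
  also have "\<dots> = x" unfolding Rp Rz using xz by simp
  finally show ?thesis unfolding R_def .
qed

lemma relator_act: "relator n m r \<Longrightarrow> ac r x = x"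
proof (induction rule: relator.induct)
  case (sq i) then show ?case by simp
next
  case (braid i j k) then show ?case using braid_act by simp
qed

lemma act_ceq: "ceq u v \<Longrightarrow> ac u = ac v"
proof (induction rule: coxeq.induct)
  case (rel r u v)
  have h: "ac r y = y" for y using rel relator_act by blast
  have "ac r = (\<lambda>y. y)" using h by (intro ext) simp
  show ?case
  proof (rule ext)
    fix x show "ac (u @ r @ v) x = ac (u @ v) x"
      using \<open>ac r = (\<lambda>y. y)\<close> by (simp add: act_append)
  qed
qed auto

end

lemma not_succ: "\<not> successively (\<noteq>) u \<Longrightarrow> \<exists>p a q. u = p @ [a, a] @ q"
proof (induction u)
  case (Cons x u')
  show ?case
  proof (cases "u' \<noteq> [] \<and> x = hd u'")
    case True
    then obtain u'' where "u' = x # u''" by (cases u') auto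
    then show ?thesis by (intro exI[of _ "[]"]) auto
  next
    case False
    then have "\<not> successively (\<noteq>) u'" using Cons.prems by (cases u') auto
    then obtain p a q where "u' = p @ [a, a] @ q" using Cons.IH by blast
    then show ?thesis by (intro exI[of _ "x # p"]) auto
  qed
qed simp

lemma alt_rep: "a \<noteq> b \<Longrightarrow> set w \<subseteq> {a, b} \<Longrightarrow> successively (\<noteq>) w \<Longrightarrow> length w = 2 * K \<Longrightarrow>
   (w \<noteq> [] \<longrightarrow> hd w = a) \<Longrightarrow> w = concat (replicate K [a, b])"
proof (induction K arbitrary: w)
  case (Suc K)
  then obtain x y w' where w: "w = x # y # w'"
    by (cases w; cases "tl w") auto
  have xy: "x = a" "y = b" using Suc.prems w by auto
  have "w' \<noteq> [] \<longrightarrow> hd w' = a" using Suc.prems w xy by (cases w') auto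
  then have "w' = concat (replicate K [a, b])"
    using Suc.prems w by (intro Suc.IH) (auto simp: successively_Cons)
  then show ?case using w xy by simp
qed simp

context cox
begin

lemma ceq_ctx: "ceq u v \<Longrightarrow> ceq (p @ u @ q) (p @ v @ q)"
proof (induction rule: coxeq.induct)
  case (refl u) then show ?case by (rule coxeq.refl)
next
  case (sym u v) show ?case using sym.IH by (rule coxeq.sym)
next
  case (trans u v w) show ?case using trans.IH by (rule coxeq.trans)
next
  case (rel r u v) then show ?case using coxeq.rel[of n m r "p @ u" "v @ q"] by simp
qed

lemma ceq_app: "ceq u u' \<Longrightarrow> ceq v v' \<Longrightarrow> ceq (u @ v) (u' @ v')"
proof -
  assume h1: "ceq u u'" and h2: "ceq v v'"
  have 1: "ceq (u @ v) (u' @ v)" using ceq_ctx[OF h1, of "[]" v] by simp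
  have 2: "ceq (u' @ v) (u' @ v')" using ceq_ctx[OF h2, of u' "[]"] by simp
  show ?thesis by (rule coxeq.trans[OF 1 2])
qed

lemma ceq_cancel: "i < n \<Longrightarrow> ceq (p @ [i, i] @ q) (p @ q)"
  by (rule coxeq.rel) (rule relator.sq)

lemma ceq_rev_cancel: "set w \<subseteq> {..<n} \<Longrightarrow> ceq (w @ rev w) [] \<and> ceq (rev w @ w) []"
proof (induction w)
  case Nil then show ?case by (simp add: coxeq.refl)
next
  case (Cons a w)
  then have a: "a < n" and IH: "ceq (w @ rev w) []" "ceq (rev w @ w) []" by auto
  have 1: "ceq ([a] @ (w @ rev w) @ [a]) ([a] @ [] @ [a])" by (rule ceq_ctx[OF IH(1)])
  have 2: "ceq ([] @ [a, a] @ []) ([] @ [])" by (rule ceq_cancel[OF a])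
  have 3: "ceq (rev w @ [a, a] @ w) (rev w @ w)" by (rule ceq_cancel[OF a])
  have c1: "ceq ((a # w) @ rev (a # w)) [a, a]" using 1 by simp
  have c2: "ceq [a, a] []" using 2 by simp
  have c3: "ceq (rev (a # w) @ (a # w)) (rev w @ w)" using 3 by simp
  show ?case using coxeq.trans[OF c1 c2] coxeq.trans[OF c3 IH(2)] by blast
qed

lemma relator_props: "relator n m r \<Longrightarrow> even (length r) \<and> set r \<subseteq> {..<n}"
proof (induction rule: relator.induct)
  case (braid i j k) then show ?case using rep_len[of k i j] rep_set[of k i j] by auto
qed simp

lemma ceq_parity: "ceq u v \<Longrightarrow> even (length u) = even (length v)"
proof (induction rule: coxeq.induct)
  case (rel r u v)
  then have "even (length r)" using relator_props by blast
  then show ?case by auto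
qed auto

lemma ceq_filter: "ceq u v \<Longrightarrow> filter (\<lambda>x. n \<le> x) u = filter (\<lambda>x. n \<le> x) v"
proof (induction rule: coxeq.induct)
  case (rel r u v)
  then have "filter (\<lambda>x. n \<le> x) r = []" using relator_props[of r]
    by (auto simp: filter_empty_conv)
  then show ?case by simp
qed auto

lemma ceq_set: "ceq u v \<Longrightarrow> set u \<subseteq> {..<n} \<Longrightarrow> set v \<subseteq> {..<n}"
proof -
  assume "ceq u v" "set u \<subseteq> {..<n}"
  then have "set (filter (\<lambda>x. n \<le> x) v) = set (filter (\<lambda>x. n \<le> x) u)" using ceq_filter[of u v]
    by simp
  then show ?thesis using \<open>set u \<subseteq> {..<n}\<close> by auto
qed

definition ell :: "nat list \<Rightarrow> nat" where
  "ell w = (LEAST k. \<exists>v. ceq v w \<and> length v = k)"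

lemma ell_ex: "\<exists>v. ceq v w \<and> length v = ell w"
  unfolding ell_def by (rule LeastI_ex) (use coxeq.refl in blast)

lemma ell_le: "ceq v w \<Longrightarrow> ell w \<le> length v"
  unfolding ell_def by (rule Least_le) blast

lemma ell_le_len: "ell w \<le> length w"
  by (rule ell_le) (rule coxeq.refl)

lemma ell_cong: "ceq u w \<Longrightarrow> ell u = ell w"
proof -
  assume h: "ceq u w"
  have "(\<exists>v. ceq v u \<and> length v = k) = (\<exists>v. ceq v w \<and> length v = k)" for k
  proof
    assume "\<exists>v. ceq v u \<and> length v = k"
    then obtain v where "ceq v u" "length v = k" by blast
    then show "\<exists>v. ceq v w \<and> length v = k" using coxeq.trans[OF _ h] by blast
  next
    assume "\<exists>v. ceq v w \<and> length v = k"
    then obtain v where "ceq v w" "length v = k" by blast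
    then show "\<exists>v. ceq v u \<and> length v = k" using coxeq.trans[OF _ coxeq.sym[OF h]] by blast
  qed
  then show ?thesis unfolding ell_def by simp
qed

lemma ell_parity: "even (ell w) = even (length w)"
proof -
  obtain v where v: "ceq v w" "length v = ell w" using ell_ex by blast
  show ?thesis using ceq_parity[OF v(1)] v(2) by simp
qed

lemma ell_app: "ell (x @ y) \<le> ell x + length y"
proof -
  obtain v where v: "ceq v x" "length v = ell x" using ell_ex by blast
  have "ceq (v @ y) (x @ y)" by (rule ceq_app[OF v(1) coxeq.refl])
  then show ?thesis using ell_le[OF \<open>ceq (v @ y) (x @ y)\<close>] v(2) by simp
qed

lemma ell_snoc_ne: "ell (w @ [s]) \<noteq> ell w"
  using ell_parity[of w] ell_parity[of "w @ [s]"] by auto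

lemma ell_snoc2: "s < n \<Longrightarrow> ell w \<le> ell (w @ [s]) + 1"
proof -
  assume s: "s < n"
  have "ceq (w @ [s, s] @ []) (w @ [])" by (rule ceq_cancel[OF s])
  then have "ell w = ell ((w @ [s]) @ [s])" using ell_cong by simp
  then show ?thesis using ell_app[of "w @ [s]" "[s]"] by simp
qed

lemma ell_snoc1: "ell (w @ [s]) \<le> ell w + 1"
  using ell_app[of w "[s]"] by simp

lemma reduced_ell: "reduced_word n m w \<Longrightarrow> ell w = length w"
proof -
  assume r: "reduced_word n m w"
  obtain v where v: "ceq v w" "length v = ell w" using ell_ex by blast
  have "length w \<le> ell w" using r v unfolding reduced_word_def by auto
  then show ?thesis using ell_le_len[of w] by simp
qed

lemma ell_zero: "ell w = 0 \<Longrightarrow> ceq [] w"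
  using ell_ex[of w] by auto

definition posv :: "(nat \<Rightarrow> real) \<Rightarrow> bool" where "posv v \<longleftrightarrow> (\<forall>i<n. 0 \<le> v i)"
definition negv :: "(nat \<Rightarrow> real) \<Rightarrow> bool" where "negv v \<longleftrightarrow> (\<forall>i<n. v i \<le> 0)"

lemma useq_nonneg:
  assumes ab: "a < n" "b < n" "a \<noteq> b" and j: "enat j \<le> m a b"
  shows "0 \<le> useq (cval a b) j"
proof (cases "m a b")
  case infinity
  then have "cval a b = 1" using ab by (simp add: cval_def Bmat_def)
  then show ?thesis by (simp add: useq_one)
next
  case (enat K)
  have K2: "2 \<le> K" using m_ge2[OF ab] enat by (simp add: numeral_eq_enat)
  have jK: "j \<le> K" using j enat by simp
  define t where "t = pi / real K"
  have t0: "0 < t" "t < pi" using K2 by (auto simp: t_def field_simps)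
  have st: "sin t > 0" using t0 by (simp add: sin_gt_zero)
  have cv: "cval a b = cos t" using enat ab by (simp add: cval_def Bmat_def t_def)
  have "real j * t \<le> real K * t" using jK t0 by (intro mult_right_mono) auto
  then have "real j * t \<le> pi" using K2 by (simp add: t_def)
  then have "0 \<le> sin (real j * t)" using t0 by (intro sin_ge_zero) auto
  then have "0 \<le> useq (cos t) j * sin t" using useq_sin[of t j] by simp
  then show ?thesis using cv st by (simp add: zero_le_mult_iff)
qed

end

context cox
begin

lemma rel_ceq_nil: "relator n m r \<Longrightarrow> ceq r []"
  using coxeq.rel[of n m r "[]" "[]"] by simp

lemma swap_rel:
  assumes ab: "a < n" "b < n" "a \<noteq> b" and K: "m a b = enat K"
    and u2: "set u2 \<subseteq> {a, b}" "successively (\<noteq>) u2" "length u2 = K" "u2 \<noteq> []" "last u2 = b"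
  shows "ceq u2 (map (\<lambda>x. if x = a then b else a) u2)"
proof -
  define sw where "sw = (\<lambda>x. if x = a then b else a)"
  define u2' where "u2' = map sw u2"
  have swinj: "\<And>x y. x \<in> {a,b} \<Longrightarrow> y \<in> {a,b} \<Longrightarrow> (sw x \<noteq> sw y) = (x \<noteq> y)"
    using ab by (auto simp: sw_def)
  have s2: "successively (\<noteq>) u2'"
    unfolding u2'_def successively_map
  proof (rule successively_mono[OF u2(2)])
    fix x y assume "x \<in> set u2" "y \<in> set u2" "x \<noteq> y"
    then show "sw x \<noteq> sw y" using swinj u2(1) by blast
  qed
  have s2r: "successively (\<noteq>) (rev u2')"
    unfolding successively_rev
    by (rule successively_mono[OF s2]) auto
  have l2: "last u2' = a" using u2 ab unfolding u2'_def sw_def by (simp add: last_map)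
  define W where "W = u2 @ rev u2'"
  have Wset: "set W \<subseteq> {a, b}" using u2(1) ab by (auto simp: W_def u2'_def sw_def)
  have hr: "hd (rev u2') = a" using l2 by (simp add: hd_rev)
  have Wsucc: "successively (\<noteq>) W"
    unfolding W_def successively_append_iff using u2(2,5) s2r hr ab(3) by simp
  have Wlen: "length W = 2 * K" using u2 by (simp add: W_def u2'_def)
  have hW: "hd W = hd u2" using u2(4) by (simp add: W_def)
  have hdu2: "hd u2 \<in> {a, b}" using u2(1) hd_in_set[OF u2(4)] by auto
  have "ceq W []"
  proof (cases "hd u2 = a")
    case True
    then have "W = concat (replicate K [a, b])"
      using alt_rep[OF ab(3) Wset Wsucc Wlen] hW by simp
    moreover have "relator n m (concat (replicate K [a, b]))"
      by (rule relator.braid) (use ab K in auto)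
    ultimately show ?thesis using rel_ceq_nil by simp
  next
    case False
    then have hb: "hd u2 = b" using hdu2 by auto
    have Wset': "set W \<subseteq> {b, a}" using Wset by auto
    have "W = concat (replicate K [b, a])"
      using alt_rep[OF ab(3)[symmetric] Wset' Wsucc Wlen] hW hb by simp
    moreover have "m b a = enat K" using K m_sym[OF ab] by simp
    then have "relator n m (concat (replicate K [b, a]))"
      by (intro relator.braid) (use ab in auto)
    ultimately show ?thesis using rel_ceq_nil by simp
  qed
  have u2'set: "set u2' \<subseteq> {..<n}" using ab by (auto simp: u2'_def sw_def)
  have rc: "ceq (rev u2' @ u2') []" using ceq_rev_cancel[OF u2'set] by blast
  have c1: "ceq (u2 @ rev u2' @ u2') (u2 @ [])" using ceq_ctx[OF rc, of u2 "[]"] by simp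
  have c2: "ceq (W @ u2') ([] @ u2')" using ceq_ctx[OF \<open>ceq W []\<close>, of "[]" u2'] by simp
  have "ceq u2 u2'" using coxeq.trans[OF coxeq.sym[OF c1] ] c2 by (simp add: W_def)
  then show ?thesis by (simp add: u2'_def sw_def)
qed

theorem pos_thm:
  "ell w = N \<Longrightarrow> set w \<subseteq> {..<n} \<Longrightarrow> s < n \<Longrightarrow> ell w < ell (w @ [s]) \<Longrightarrow> posv (ac w (e s))"
proof (induction N arbitrary: w s rule: less_induct)
  case (less N w s)
  note wset = less.prems(2) and sn = less.prems(3) and lt = less.prems(4)
  show ?case
  proof (cases "N = 0")
    case True
    then have "ceq [] w" using less.prems(1) ell_zero by simp
    then have "ac w = ac []" using act_ceq[OF coxeq.sym[OF \<open>ceq [] w\<close>]] by simp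
    then show ?thesis by (auto simp: posv_def simple_root_def)
  next
    case False
    obtain w0 where w0: "ceq w0 w" "length w0 = ell w" using ell_ex by blast
    have w0set: "set w0 \<subseteq> {..<n}" using ceq_set[OF coxeq.sym[OF w0(1)] wset] .
    have "w0 \<noteq> []" using w0 False less.prems(1) by auto
    then obtain p s' where ps: "w0 = p @ [s']" by (metis rev_exhaust)
    have s'n: "s' < n" using w0set ps by auto
    have pset: "set p \<subseteq> {..<n}" using w0set ps by auto
    have lp: "length p + 1 = ell w" using w0 ps by simp
    have ss: "s' \<noteq> s"
    proof
      assume "s' = s"
      have "ceq (w @ [s]) (w0 @ [s])" using ceq_app[OF coxeq.sym[OF w0(1)] coxeq.refl] .
      moreover have "ceq (w0 @ [s]) p" using ceq_cancel[OF sn, of p "[]"] ps \<open>s' = s\<close> by simp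
      ultimately have "ceq (w @ [s]) p" by (rule coxeq.trans)
      then have "ell (w @ [s]) \<le> length p" using ell_cong[OF \<open>ceq (w @ [s]) p\<close>] ell_le_len[of p] by simp
      then show False using lt lp by simp
    qed
    have ellp: "ell p + 1 = ell w"
    proof -
      have "ell w = ell w0" using ell_cong[OF w0(1)] by simp
      also have "\<dots> \<le> ell p + 1" using ell_app[of p "[s']"] ps by simp
      finally show ?thesis using ell_le_len[of p] lp by simp
    qed
    define Ap where "Ap = (\<lambda>(v, u). set v \<subseteq> {..<n} \<and> set u \<subseteq> {s, s'} \<and> ceq (v @ u) w
       \<and> ell v + length u = ell w)"
    have "Ap (p, [s'])" using pset ps w0 ellp by (simp add: Ap_def)
    then obtain vu where Avu: "Ap vu" and minvu: "\<forall>y. Ap y \<longrightarrow> ell (fst vu) \<le> ell (fst y)"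
      using ex_has_least_nat[of Ap "(p, [s'])" "\<lambda>x. ell (fst x)"] by blast
    obtain v u where vu: "vu = (v, u)" by fastforce
    have vset: "set v \<subseteq> {..<n}" and uset: "set u \<subseteq> {s, s'}" and vuw: "ceq (v @ u) w"
      and len: "ell v + length u = ell w" using Avu vu by (auto simp: Ap_def)
    have minv: "\<And>v' u'. Ap (v', u') \<Longrightarrow> ell v \<le> ell v'" using minvu vu by fastforce
    have ellv: "ell v < N"
      using minv[OF \<open>Ap (p, [s'])\<close>] ellp less.prems(1) by simp
    have bound: "ell w \<le> ell v + length u'" if h: "ceq u' u" for u'
    proof -
      have "ceq (v @ u') w" using coxeq.trans[OF ceq_app[OF coxeq.refl h] vuw] .
      then have "ell w = ell (v @ u')" using ell_cong by simp
      then show ?thesis using ell_app[of v u'] by simp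
    qed
    have up: "ell v < ell (v @ [t])" if t: "t \<in> {s, s'}" for t
    proof (rule ccontr)
      assume "\<not> ell v < ell (v @ [t])"
      then have "ell (v @ [t]) < ell v" using ell_snoc_ne[of v t] by simp
      moreover have tn: "t < n" using t sn s'n by auto
      ultimately have e1: "ell (v @ [t]) + 1 = ell v" using ell_snoc2[of t v] by simp
      have "ceq ((v @ [t]) @ (t # u)) (v @ u)" using ceq_cancel[OF tn, of v u] by simp
      then have "ceq ((v @ [t]) @ (t # u)) w" using coxeq.trans[OF _ vuw] by blast
      then have "Ap (v @ [t], t # u)" using vset tn t uset e1 len by (auto simp: Ap_def)
      then have "ell v \<le> ell (v @ [t])" using minv by blast
      then show False using e1 by simp
    qed
    have us: "ell v < ell (v @ [s])" "ell v < ell (v @ [s'])" using up by auto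
    have ps1: "posv (ac v (e s))"
      using less.IH[OF ellv HOL.refl vset sn us(1)] by simp
    have ps2: "posv (ac v (e s'))"
      using less.IH[OF ellv HOL.refl vset s'n us(2)] by simp
    have usucc: "successively (\<noteq>) u"
    proof (rule ccontr)
      assume "\<not> successively (\<noteq>) u"
      then obtain p1 a q1 where u: "u = p1 @ [a, a] @ q1" using not_succ by blast
      have "a < n" using u uset sn s'n by auto
      then have "ceq (p1 @ q1) u" using coxeq.sym[OF ceq_cancel[of a p1 q1]] u by simp
      then have "ell w \<le> ell v + length (p1 @ q1)" by (rule bound)
      then show False using len u by simp
    qed
    have endlem: False if h: "ceq (u3 @ [s]) u" "length u3 + 1 = length u" for u3
    proof -
      have e1: "ceq (w @ [s]) ((v @ u) @ [s])" using ceq_app[OF coxeq.sym[OF vuw] coxeq.refl] .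
      have e2: "ceq ((v @ u) @ [s]) ((v @ (u3 @ [s])) @ [s])"
        using ceq_app[OF ceq_app[OF coxeq.refl coxeq.sym[OF h(1)]] coxeq.refl] .
      have e3: "ceq ((v @ (u3 @ [s])) @ [s]) (v @ u3)"
        using ceq_cancel[OF sn, of "v @ u3" "[]"] by simp
      have "ceq (w @ [s]) (v @ u3)" using coxeq.trans[OF coxeq.trans[OF e1 e2] e3] .
      then have "ell (w @ [s]) = ell (v @ u3)" by (rule ell_cong)
      then have "ell (w @ [s]) \<le> ell v + length u3" using ell_app[of v u3] by simp
      then show False using lt len h(2) by simp
    qed
    have ulast: "u \<noteq> [] \<longrightarrow> last u = s'"
    proof
      assume une: "u \<noteq> []"
      then have "last u \<in> {s, s'}" using uset last_in_set[OF une] by blast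
      moreover have "last u \<noteq> s"
      proof
        assume "last u = s"
        then have "u = butlast u @ [s]" using une by (metis append_butlast_last_id)
        then have "ceq (butlast u @ [s]) u" by (metis coxeq.refl)
        moreover have "length (butlast u) + 1 = length u" using une by simp
        ultimately show False using endlem by blast
      qed
      ultimately show "last u = s'" by auto
    qed
    have ulen: "enat (Suc (length u)) \<le> m s s'"
    proof (cases "m s s'")
      case infinity then show ?thesis by simp
    next
      case (enat K)
      show ?thesis
      proof (rule ccontr)
        assume "\<not> ?thesis"
        then have Ku: "K \<le> length u" using enat by simp
        have K2: "2 \<le> K" using m_ge2[OF sn s'n ss[symmetric]] enat by (simp add: numeral_eq_enat)
        define u1 where "u1 = take (length u - K) u"
        define u2 where "u2 = drop (length u - K) u"
        have uu: "u = u1 @ u2" by (simp add: u1_def u2_def)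
        have l2: "length u2 = K" using Ku by (simp add: u2_def)
        have u2ne: "u2 \<noteq> []" using l2 K2 by auto
        have u2p: "set u2 \<subseteq> {s, s'}" "successively (\<noteq>) u2" "last u2 = s'"
          using uset usucc ulast uu u2ne by (auto simp: successively_append_iff)
        define sw where "sw = (\<lambda>x. if x = s then s' else s)"
        have "ceq u2 (map sw u2)"
          using swap_rel[OF sn s'n ss[symmetric] enat u2p(1,2) l2 u2ne u2p(3)] by (simp add: sw_def)
        then have cu: "ceq u (u1 @ map sw u2)" using uu ceq_app[OF coxeq.refl] by simp
        have "last (map sw u2) = s" using u2p(3) u2ne ss by (simp add: last_map sw_def)
        then have "u1 @ map sw u2 = (u1 @ butlast (map sw u2)) @ [s]"
          using u2ne by (metis append_assoc append_butlast_last_id list.map_disc_iff)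
        then have "ceq ((u1 @ butlast (map sw u2)) @ [s]) u" using coxeq.sym[OF cu] by simp
        moreover have "length (u1 @ butlast (map sw u2)) + 1 = length u" using uu u2ne by simp
        ultimately show False using endlem by blast
      qed
    qed
    define c where "c = cval s s'"
    define h where "h = (if u = [] then s else hd u)"
    define h' where "h' = (if h = s then s' else s)"
    have "u \<noteq> [] \<Longrightarrow> hd u \<in> {s, s'}" using uset hd_in_set by blast
    then have hh: "h \<in> {s, s'}" "h' \<in> {s, s'}" by (auto simp: h_def h'_def)
    have du: "ac u (e s) = (\<lambda>k. useq c (Suc (length u)) * e h k + useq c (length u) * e h' k)"
      using dihedral[OF sn s'n ss[symmetric] uset usucc ulast] by (simp add: c_def h_def h'_def)
    have U1: "0 \<le> useq c (Suc (length u))"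
      unfolding c_def by (rule useq_nonneg[OF sn s'n ss[symmetric] ulen])
    have U0: "0 \<le> useq c (length u)"
      unfolding c_def by (rule useq_nonneg[OF sn s'n ss[symmetric]]) (use ulen in \<open>simp add: order_trans[OF _ ulen]\<close>)
    have "ac w (e s) = ac (v @ u) (e s)" using act_ceq[OF vuw] by simp
    also have "\<dots> = (\<lambda>k. useq c (Suc (length u)) * ac v (e h) k + useq c (length u) * ac v (e h') k)"
      by (simp add: act_append du act_lin)
    finally have eq: "ac w (e s) = \<dots>" .
    have p1: "posv (ac v (e h))" "posv (ac v (e h'))" using hh ps1 ps2 by auto
    show ?thesis unfolding eq posv_def using p1 U0 U1 by (auto simp: posv_def)
  qed
qed

end

context cox
begin

lemma act_neg: "ac w (\<lambda>k. - x k) = (\<lambda>k. - ac w x k)"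
proof -
  have "(\<lambda>k. - x k) = (\<lambda>k. (-1) * x k + 0 * x k)" by simp
  then show ?thesis using act_lin[of w "-1" x 0 x] by simp
qed

lemma act_refl_neg: "s < n \<Longrightarrow> ac (w @ [s]) (e s) = (\<lambda>k. - ac w (e s) k)"
  by (simp add: act_append sr_e_self act_neg)

lemma dichotomy:
  assumes w: "set w \<subseteq> {..<n}" and s: "s < n"
  shows "posv (ac w (e s)) \<or> negv (ac w (e s))"
proof (cases "ell w < ell (w @ [s])")
  case True
  then show ?thesis using pos_thm[OF HOL.refl w s] by simp
next
  case False
  then have lt: "ell (w @ [s]) < ell w" using ell_snoc_ne[of w s] by simp
  have "ceq ((w @ [s]) @ [s]) w" using ceq_cancel[OF s, of w "[]"] by simp
  then have "ell ((w @ [s]) @ [s]) = ell w" by (rule ell_cong)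
  then have "ell (w @ [s]) < ell ((w @ [s]) @ [s])" using lt by simp
  then have "posv (ac (w @ [s]) (e s))" using pos_thm[OF HOL.refl _ s] w s by simp
  then show ?thesis using act_refl_neg[OF s, of w] by (auto simp: posv_def negv_def)
qed

lemma ell_app2: "ell (x @ y) \<le> length x + ell y"
proof -
  obtain v where v: "ceq v y" "length v = ell y" using ell_ex by blast
  have "ceq (x @ v) (x @ y)" by (rule ceq_app[OF coxeq.refl v(1)])
  then show ?thesis using ell_le[OF \<open>ceq (x @ v) (x @ y)\<close>] v(2) by simp
qed

lemma ell_red_split: "ell (a @ b) = length (a @ b) \<Longrightarrow> ell a = length a \<and> ell b = length b"
  using ell_app[of a b] ell_app2[of a b] ell_le_len[of a] ell_le_len[of b] by simp

lemma faithful: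
  assumes u: "set u \<subseteq> {..<n}" and v: "set v \<subseteq> {..<n}" and eq: "ac u = ac v"
  shows "ceq u v"
proof -
  define z where "z = u @ rev v"
  have zset: "set z \<subseteq> {..<n}" using u v by (auto simp: z_def)
  have zid: "ac z x = x" for x
    unfolding z_def act_append eq using act_rev_cancel[OF v] by simp
  have "ceq z []"
  proof (cases "ell z = 0")
    case True then show ?thesis using ell_zero coxeq.sym by blast
  next
    case False
    obtain z0 where z0: "ceq z0 z" "length z0 = ell z" using ell_ex by blast
    have z0set: "set z0 \<subseteq> {..<n}" using ceq_set[OF coxeq.sym[OF z0(1)] zset] .
    have "z0 \<noteq> []" using z0 False by auto
    then obtain p s where ps: "z0 = p @ [s]" by (metis rev_exhaust)
    have s: "s < n" and pset: "set p \<subseteq> {..<n}" using z0set ps by auto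
    have "ell z0 = ell z" by (rule ell_cong[OF z0(1)])
    then have "ell (p @ [s]) = length p + 1" using z0 ps by simp
    then have "ell p < ell (p @ [s])" using ell_le_len[of p] by simp
    then have pp: "posv (ac p (e s))" using pos_thm[OF HOL.refl pset s] by simp
    have "ac z0 = ac z" by (rule act_ceq[OF z0(1)])
    then have "ac z0 (e s) = e s" using zid by simp
    then have "(\<lambda>k. - ac p (e s) k) = e s" using act_refl_neg[OF s, of p] ps by simp
    then have "- ac p (e s) s = 1" by (metis e_same)
    then show ?thesis using pp s by (auto simp: posv_def)
  qed
  have a2: "ceq (u @ rev v @ v) v" using ceq_app[OF \<open>ceq z []\<close> coxeq.refl, of v] by (simp add: z_def)
  have a1: "ceq (u @ (rev v @ v)) (u @ [])"
    using ceq_app[OF coxeq.refl conjunct2[OF ceq_rev_cancel[OF v]]] .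
  then have a1': "ceq (u @ rev v @ v) u" by simp
  show ?thesis using coxeq.trans[OF coxeq.sym[OF a1'] a2] .
qed

lemma B_root2: "set w \<subseteq> {..<n} \<Longrightarrow> k < n \<Longrightarrow> B (ac w (e k)) (ac w (e k)) = 2"
  using act_inv[of w "e k" "e k"] by (simp add: B_ee)

lemma refl_formula:
  assumes w: "set w \<subseteq> {..<n}" and k: "k < n"
  shows "ac (w @ [k] @ rev w) x = (\<lambda>i. x i - B x (ac w (e k)) * ac w (e k) i)"
proof -
  define y where "y = ac (rev w) x"
  have "ac (w @ [k] @ rev w) x = ac w (sr k y)" by (simp add: act_append y_def)
  also have "sr k y = (\<lambda>i. 1 * y i + (- B y (e k)) * e k i)" by (rule sr_alt)
  also have "ac w \<dots> = (\<lambda>i. 1 * ac w y i + (- B y (e k)) * ac w (e k) i)" by (rule act_lin)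
  also have "ac w y = x" unfolding y_def by (rule act_rev_cancel[OF w])
  also have "B y (e k) = B x (ac w (e k))"
    using act_inv[OF w, of y "e k"] \<open>ac w y = x\<close> by simp
  finally show ?thesis by simp
qed

lemma B_zero: "(\<forall>i<n. v i = 0) \<Longrightarrow> B v u = 0"
  by (simp add: Bform_def)

lemma root_unique:
  assumes w: "set w \<subseteq> {..<n}" "k < n" and w': "set w' \<subseteq> {..<n}" "k' < n"
    and eq: "ceq (w' @ [k'] @ rev w') (w @ [k] @ rev w)"
    and p: "posv (ac w (e k))" "posv (ac w' (e k'))"
  shows "ac w' (e k') = ac w (e k)"
proof -
  define r where "r = ac w (e k)"
  define b where "b = ac w' (e k')"
  have Br: "B r r = 2" using B_root2[OF w] by (simp add: r_def)
  have Bb: "B b b = 2" using B_root2[OF w'] by (simp add: b_def)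
  have "ac (w' @ [k'] @ rev w') = ac (w @ [k] @ rev w)" by (rule act_ceq[OF eq])
  then have E: "\<And>x. (\<lambda>i. x i - B x b * b i) = (\<lambda>i. x i - B x r * r i)"
    using refl_formula[OF w] refl_formula[OF w'] by (simp add: r_def b_def)
  have E2: "B x b * b i = B x r * r i" for x i
    using fun_cong[OF E[of x], of i] by simp
  define l where "l = B r b / 2"
  have rl: "r i = l * b i" for i using E2[of r i] Br by (simp add: l_def)
  have Bsym: "B b r = B r b" by (rule B_sym)
  have bl: "2 * b i = 2 * (l * l) * b i" for i
    using E2[of b i] Bb rl[of i] Bsym by (simp add: l_def algebra_simps)
  obtain i where i: "i < n" "b i \<noteq> 0"
  proof (rule ccontr)
    assume "\<not> thesis"
    then have "\<forall>i<n. b i = 0" using that by blast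
    then show False using B_zero[of b b] Bb by simp
  qed
  have ll: "l * l = 1" using bl[of i] i by simp
  have "l = 1"
  proof (rule ccontr)
    assume "l \<noteq> 1"
    then have "l = -1" using ll by (metis mult_cancel_left1 square_eq_1_iff)
    then have "\<forall>j<n. r j = 0" using p rl unfolding posv_def r_def b_def
      by (metis add.inverse_neutral mult_minus1 neg_0_le_iff_le order_antisym)
    then show False using B_zero[of r r] Br by simp
  qed
  then show ?thesis using rl by (auto simp: r_def b_def)
qed

lemma root_of_eval:
  assumes red: "reduced_word n m xs" and xs: "set xs \<subseteq> {..<n}" and i: "i < length xs"
  shows "root_of n m (refl_word xs i) = ac (take i xs) (e (xs ! i))"
proof -
  define w where "w = take i xs"
  define k where "k = xs ! i"
  have wset: "set w \<subseteq> {..<n}" using xs by (auto simp: w_def dest: in_set_takeD)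
  have kn: "k < n" using xs nth_mem[OF i] by (auto simp: k_def)
  have "ell xs = length xs" by (rule reduced_ell[OF red])
  moreover have "xs = take (Suc i) xs @ drop (Suc i) xs" by simp
  ultimately have "ell (take (Suc i) xs) = length (take (Suc i) xs)"
    using ell_red_split[of "take (Suc i) xs" "drop (Suc i) xs"] by simp
  moreover have "take (Suc i) xs = w @ [k]" using i by (simp add: w_def k_def take_Suc_conv_app_nth)
  ultimately have ewk: "ell (w @ [k]) = length w + 1" by simp
  then have "ell w = length w" using ell_red_split[of w "[k]"] by simp
  then have "ell w < ell (w @ [k])" using ewk by simp
  then have pos: "posv (ac w (e k))" using pos_thm[OF HOL.refl wset kn] by simp
  have "root_of n m (refl_word xs i) = ac w (e k)"
    unfolding root_of_def
  proof (rule the_equality)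
    show "(\<forall>i<n. 0 \<le> ac w (e k) i) \<and> (\<exists>w' k'. k' < n \<and> set w' \<subseteq> {..<n} \<and>
        ac w (e k) = ac w' (e k') \<and> ceq (w' @ [k'] @ rev w') (refl_word xs i))"
      using pos wset kn by (auto simp: posv_def refl_word_def w_def k_def intro!: coxeq.refl)
  next
    fix \<beta> assume h: "(\<forall>i<n. 0 \<le> \<beta> i) \<and> (\<exists>w' k'. k' < n \<and> set w' \<subseteq> {..<n} \<and>
        \<beta> = ac w' (e k') \<and> ceq (w' @ [k'] @ rev w') (refl_word xs i))"
    then obtain w' k' where h2: "k' < n" "set w' \<subseteq> {..<n}" "\<beta> = ac w' (e k')"
      "ceq (w' @ [k'] @ rev w') (w @ [k] @ rev w)" by (auto simp: refl_word_def w_def k_def)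
    have "posv (ac w' (e k'))" using h h2(3) by (simp add: posv_def)
    then show "\<beta> = ac w (e k)" using root_unique[OF wset kn h2(2,1) h2(4) pos] h2(3) by simp
  qed
  then show ?thesis by (simp add: w_def k_def)
qed

lemma commute_of_orth:
  assumes w: "set w \<subseteq> {..<n}" "k < n" and w': "set w' \<subseteq> {..<n}" "k' < n"
    and orth: "B (ac w (e k)) (ac w' (e k')) = 0"
  shows "ceq ((w @ [k] @ rev w) @ (w' @ [k'] @ rev w')) ((w' @ [k'] @ rev w') @ (w @ [k] @ rev w))"
proof (rule faithful)
  show "set ((w @ [k] @ rev w) @ (w' @ [k'] @ rev w')) \<subseteq> {..<n}" using w w' by auto
  show "set ((w' @ [k'] @ rev w') @ (w @ [k] @ rev w)) \<subseteq> {..<n}" using w w' by auto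
  define r where "r = ac w (e k)"
  define b where "b = ac w' (e k')"
  have o1: "B r b = 0" and o2: "B b r = 0" using orth B_sym by (auto simp: r_def b_def)
  show "ac ((w @ [k] @ rev w) @ (w' @ [k'] @ rev w')) = ac ((w' @ [k'] @ rev w') @ (w @ [k] @ rev w))"
  proof (rule ext)
    fix x
    have lin: "B (\<lambda>i. x i - B x c * c i) d = B x d - B x c * B c d" for c d
      using B_lin_left[of 1 x "- B x c" c d] by simp
    show "ac ((w @ [k] @ rev w) @ (w' @ [k'] @ rev w')) x = ac ((w' @ [k'] @ rev w') @ (w @ [k] @ rev w)) x"
      unfolding act_append[of "w @ [k] @ rev w"] act_append[of "w' @ [k'] @ rev w'"]
      unfolding refl_formula[OF w] refl_formula[OF w'] r_def[symmetric] b_def[symmetric]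
      by (simp add: lin o1 o2) (simp add: algebra_simps)
  qed
qed

end

lemma before_iff: "before y a b \<longleftrightarrow> (\<exists>u v. y = u @ a # v \<and> b \<in> set v)"
proof
  assume "before y a b"
  then obtain p q where pq: "p < q" "q < length y" "y ! p = a" "y ! q = b"
    unfolding before_def by blast
  define u where "u = take p y"
  define v where "v = drop (Suc p) y"
  have "y = u @ a # v" using pq id_take_nth_drop[of p y] by (simp add: u_def v_def)
  moreover have "b \<in> set v"
  proof -
    have "v ! (q - Suc p) = b" using pq by (simp add: v_def)
    moreover have "q - Suc p < length v" using pq by (simp add: v_def)
    ultimately show ?thesis using nth_mem by blast
  qed
  ultimately show "\<exists>u v. y = u @ a # v \<and> b \<in> set v" by blast
next
  assume "\<exists>u v. y = u @ a # v \<and> b \<in> set v"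
  then obtain u v where uv: "y = u @ a # v" "b \<in> set v" by blast
  then obtain k where k: "k < length v" "v ! k = b" by (metis in_set_conv_nth)
  show "before y a b" unfolding before_def
    by (rule exI[of _ "length u"], rule exI[of _ "length u + Suc k"]) (use uv k in \<open>auto simp: nth_append\<close>)
qed

lemma before_Cons_iff: "before (x # z) a b \<longleftrightarrow> (a = x \<and> b \<in> set z) \<or> before z a b"
proof
  assume "before (x # z) a b"
  then obtain u v where uv: "x # z = u @ a # v" "b \<in> set v" using before_iff by blast
  show "(a = x \<and> b \<in> set z) \<or> before z a b"
  proof (cases u)
    case Nil then show ?thesis using uv by auto
  next
    case (Cons c u') then show ?thesis using uv before_iff by auto
  qed
next
  assume "(a = x \<and> b \<in> set z) \<or> before z a b"
  then show "before (x # z) a b"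
  proof
    assume "a = x \<and> b \<in> set z" then show ?thesis using before_iff[of "x # z"] by force
  next
    assume "before z a b"
    then obtain u v where "z = u @ a # v" "b \<in> set v" using before_iff by blast
    then show ?thesis using before_iff[of "x # z"] by (metis append_Cons)
  qed
qed

lemma before_snoc_iff: "before (z @ [x]) a b \<longleftrightarrow> (b = x \<and> a \<in> set z) \<or> before z a b"
proof
  assume "before (z @ [x]) a b"
  then obtain u v where uv: "z @ [x] = u @ a # v" "b \<in> set v" using before_iff by blast
  show "(b = x \<and> a \<in> set z) \<or> before z a b"
  proof (cases v rule: rev_cases)
    case Nil then show ?thesis using uv by auto
  next
    case (snoc v' c)
    then have "z = u @ a # v'" "x = c" using uv by auto
    then show ?thesis using uv snoc before_iff by auto
  qed
next
  assume "(b = x \<and> a \<in> set z) \<or> before z a b"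
  then show "before (z @ [x]) a b"
  proof
    assume h: "b = x \<and> a \<in> set z"
    then obtain u v where "z = u @ a # v" by (metis split_list)
    then show ?thesis using h before_iff[of "z @ [x]"] by force
  next
    assume "before z a b"
    then obtain u v where "z = u @ a # v" "b \<in> set v" using before_iff by blast
    then show ?thesis using before_iff[of "z @ [x]"] by force
  qed
qed

lemma before_distinct: "distinct y \<Longrightarrow> before y a b \<Longrightarrow> a \<noteq> b \<and> a \<in> set y \<and> b \<in> set y"
  using before_iff[of y a b] by auto

lemma before_remove:
  assumes "distinct (p @ x # q)" "before (p @ x # q) a b" "a \<noteq> x" "b \<noteq> x"
  shows "before (p @ q) a b"
proof -
  obtain u v where uv: "p @ x # q = u @ a # v" "b \<in> set v" using assms(2) before_iff by blast
  have "removeAll x (p @ x # q) = p @ q" using assms(1) by simp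
  then have "p @ q = removeAll x u @ a # removeAll x v" using uv assms(3) by simp
  moreover have "b \<in> set (removeAll x v)" using uv assms(4) by simp
  ultimately show ?thesis using before_iff by blast
qed

lemma before_x_second:
  assumes "distinct (p @ x # q)" "before (p @ x # q) a x"
  shows "a \<in> set p"
proof -
  obtain u v where uv: "p @ x # q = u @ a # v" "x \<in> set v" using assms(2) before_iff by blast
  obtain v1 v2 where v: "v = v1 @ x # v2" using uv(2) by (metis split_list)
  have "p @ x # q = (u @ a # v1) @ x # v2" using uv v by simp
  moreover have "x \<notin> set p" "x \<notin> set q" using assms(1) by auto
  moreover have d: "distinct ((u @ a # v1) @ x # v2)" using assms(1) uv(1) v by simp
  then have "x \<notin> set (u @ a # v1)" by auto
  moreover have "x \<notin> set v2" using d by auto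
  ultimately have "p = u @ a # v1" using append_Cons_eq_iff by metis
  then show ?thesis by simp
qed

context cox
begin

lemma sr_comm:
  assumes "a < n" "x < n" "Bmat m a x = 0"
  shows "sr a (sr x v) = sr x (sr a v)"
proof -
  have ax: "B (e x) (e a) = 0" "B (e a) (e x) = 0" using assms Bmat_sym by (auto simp: B_ee)
  have 1: "sr a (e x) = e x" "sr x (e a) = e a" using ax by (auto intro: sr_fix)
  have L: "sr a (sr x v) = (\<lambda>k. 1 * sr a v k + (- B v (e x)) * sr a (e x) k)"
    by (subst sr_alt[of x], rule sr_lin)
  have R: "sr x (sr a v) = (\<lambda>k. 1 * sr a v k + (- B (sr a v) (e x)) * e x k)"
    by (rule sr_alt)
  have "B (sr a v) (e x) = B v (e x)"
    using B_lin_left[of 1 v "- B v (e a)" "e a" "e x"] ax by (simp add: sref_def)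
  then show ?thesis unfolding L R 1 by simp
qed

lemma act_comm_move:
  assumes "x < n" "set p \<subseteq> {..<n}" "\<forall>a\<in>set p. Bmat m a x = 0"
  shows "ac (p @ [x]) v = ac (x # p) v"
  using assms
proof (induction p arbitrary: v)
  case (Cons a p)
  have "a < n" "Bmat m a x = 0" using Cons.prems by auto
  then have "sr a (sr x (ac p v)) = sr x (sr a (ac p v))" using sr_comm Cons.prems(1) by blast
  then show ?case using Cons by (simp add: act_append)
qed simp

lemma act_rev_eq: "set y \<subseteq> {..<n} \<Longrightarrow> set y' \<subseteq> {..<n} \<Longrightarrow> ac y = ac y' \<Longrightarrow> ac (rev y) = ac (rev y')"
proof (rule ext)
  fix v assume h: "set y \<subseteq> {..<n}" "set y' \<subseteq> {..<n}" "ac y = ac y'"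
  have "ac (rev y) v = ac (rev y) (ac y' (ac (rev y') v))" using act_rev_cancel[OF h(2)] by simp
  also have "\<dots> = ac (rev y) (ac y (ac (rev y') v))" using h(3) by simp
  also have "\<dots> = ac (rev y') v" using act_rev_cancel2[OF h(1)] by simp
  finally show "ac (rev y) v = ac (rev y') v" .
qed

lemma first_coord_neg: "x \<notin> set z \<Longrightarrow> x < n \<Longrightarrow> ac (rev (x # z)) (e x) x = -1"
  by (simp add: act_append sr_e_self act_neg act_coord)

lemma noncomm_pos:
  assumes yd: "distinct (p @ x # q)" and ys: "set (p @ x # q) \<subseteq> {..<n}"
    and a: "a \<in> set p" and nc: "Bmat m x a \<noteq> 0"
  shows "0 < ac (rev (p @ x # q)) (e x) a"
proof -
  obtain p1 p2 where p: "p = p1 @ a # p2" using a by (metis split_list)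
  have xn: "x < n" and an: "a < n" using ys a by auto
  have ax: "a \<noteq> x" "a \<notin> set p1" "a \<notin> set p2" "a \<notin> set q" "x \<notin> set p1"
    using yd p by auto
  define eps where "eps = ac (rev p1) (e x)"
  have p1s: "set (rev p1) \<subseteq> {..<n}" using ys p by auto
  have epsx: "eps x = 1" using ax by (simp add: eps_def act_coord)
  have epsa: "eps a = 0" using ax by (simp add: eps_def act_coord)
  have "posv eps \<or> negv eps" unfolding eps_def by (rule dichotomy[OF p1s xn])
  then have epos: "posv eps" using epsx xn by (auto simp: negv_def)
  have "B eps (e a) = (\<Sum>i<n. eps i * Bmat m i a)" by (rule B_e_right[OF an])
  also have "\<dots> = eps x * Bmat m x a + (\<Sum>i\<in>{..<n} - {x}. eps i * Bmat m i a)"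
    using xn by (simp add: sum.remove)
  also have "(\<Sum>i\<in>{..<n} - {x}. eps i * Bmat m i a) \<le> 0"
  proof (rule sum_nonpos)
    fix i assume i: "i \<in> {..<n} - {x}"
    show "eps i * Bmat m i a \<le> 0"
    proof (cases "i = a")
      case True then show ?thesis using epsa by simp
    next
      case False
      then show ?thesis using epos i Bmat_nonpos[of i a] an
        by (auto simp: posv_def mult_nonneg_nonpos)
    qed
  qed
  moreover have "Bmat m x a < 0" using Bmat_nonpos[OF xn an ax(1)[symmetric]] nc by simp
  ultimately have Bneg: "B eps (e a) < 0" using epsx by simp
  have "ac (rev (p @ x # q)) (e x) = ac (rev q) (sr x (ac (rev p2) (sr a eps)))"
    by (simp add: p act_append eps_def)
  then have "ac (rev (p @ x # q)) (e x) a = sr a eps a"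
    using ax by (simp add: act_coord sr_coord)
  also have "\<dots> = - B eps (e a)" using epsa by (simp add: sref_def)
  finally show ?thesis using Bneg by simp
qed

lemma orient:
  "distinct y' \<Longrightarrow> set y' \<subseteq> {..<n} \<Longrightarrow> distinct y \<Longrightarrow> set y \<subseteq> {..<n} \<Longrightarrow> ac y = ac y' \<Longrightarrow>
   set y = set y' \<and> (\<forall>a b. Bmat m a b \<noteq> 0 \<longrightarrow> before y a b \<longrightarrow> before y' a b)"
proof (induction y' arbitrary: y)
  case Nil
  show ?case
  proof (cases y)
    case Nil then show ?thesis by (simp add: before_def)
  next
    case (Cons x z)
    have "ac (rev y) = ac (rev [])" by (rule act_rev_eq) (use Nil.prems in auto)
    then have "ac (rev y) (e x) x = 1" by simp
    moreover have "ac (rev y) (e x) x = -1"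
      using first_coord_neg[of x z] Nil.prems Cons by auto
    ultimately show ?thesis by simp
  qed
next
  case (Cons x z')
  have xn: "x < n" using Cons.prems by auto
  have revs: "ac (rev y) = ac (rev (x # z'))" by (rule act_rev_eq) (use Cons.prems in auto)
  have gx: "ac (rev (x # z')) (e x) x = -1" using first_coord_neg Cons.prems by auto
  have xy: "x \<in> set y"
  proof (rule ccontr)
    assume "x \<notin> set y"
    then have "ac (rev y) (e x) x = 1" by (simp add: act_coord)
    then show False using gx revs by simp
  qed
  then obtain p q where y: "y = p @ x # q" by (metis split_list)
  have comm: "\<forall>a\<in>set p. Bmat m x a = 0"
  proof (rule ccontr)
    assume "\<not> ?thesis"
    then obtain a where a: "a \<in> set p" "Bmat m x a \<noteq> 0" by blast
    have "0 < ac (rev (p @ x # q)) (e x) a"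
      using noncomm_pos[OF _ _ a] Cons.prems y by auto
    moreover have "a < n" using a Cons.prems y by auto
    moreover have "posv (ac (rev y) (e x)) \<or> negv (ac (rev y) (e x))"
      by (rule dichotomy) (use Cons.prems xn in auto)
    ultimately show False using gx revs xn y by (auto simp: posv_def negv_def)
  qed
  have pn: "set p \<subseteq> {..<n}" "set q \<subseteq> {..<n}" using Cons.prems y by auto
  have comm': "\<forall>a\<in>set p. Bmat m a x = 0"
  proof
    fix a assume a: "a \<in> set p"
    then have "a < n" using pn by auto
    then show "Bmat m a x = 0" using comm a Bmat_sym[OF _ xn] by simp
  qed
  have "ac y = ac (x # (p @ q))"
  proof (rule ext)
    fix v
    have "ac y v = ac (p @ [x]) (ac q v)" by (simp add: y act_append)
    also have "\<dots> = ac (x # p) (ac q v)" by (rule act_comm_move[OF xn pn(1) comm'])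
    finally show "ac y v = ac (x # (p @ q)) v" by (simp add: act_append)
  qed
  then have "ac (x # (p @ q)) = ac (x # z')" using Cons.prems(5) by metis
  then have pq: "ac (p @ q) = ac z'"
  proof -
    assume h: "ac (x # (p @ q)) = ac (x # z')"
    show ?thesis
    proof (rule ext)
      fix v
      have "sr x (ac (p @ q) v) = sr x (ac z' v)" using fun_cong[OF h, of v] by simp
      then have "sr x (sr x (ac (p @ q) v)) = sr x (sr x (ac z' v))" by simp
      then show "ac (p @ q) v = ac z' v" using xn by simp
    qed
  qed
  have IH: "set (p @ q) = set z' \<and> (\<forall>a b. Bmat m a b \<noteq> 0 \<longrightarrow> before (p @ q) a b \<longrightarrow> before z' a b)"
    using Cons.IH[OF _ _ _ _ pq] Cons.prems y by auto
  have dy: "distinct (p @ x # q)" using Cons.prems y by simp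
  show ?case
  proof
    show "set y = set (x # z')" using IH y by auto
  next
    show "\<forall>a b. Bmat m a b \<noteq> 0 \<longrightarrow> before y a b \<longrightarrow> before (x # z') a b"
    proof (intro allI impI)
      fix a b assume nz: "Bmat m a b \<noteq> 0" and bf: "before y a b"
      have bd: "a \<noteq> b" "a \<in> set y" "b \<in> set y" using before_distinct[OF _ bf] Cons.prems by auto
      show "before (x # z') a b"
      proof (cases "a = x")
        case True
        then have "b \<in> set z'" using bd IH y by auto
        then show ?thesis using True before_Cons_iff by auto
      next
        case False
        show ?thesis
        proof (cases "b = x")
          case True
          then have "a \<in> set p" using before_x_second[OF dy] bf y by simp
          then have "Bmat m x a = 0" using comm by auto
          then have "Bmat m a b = 0" using True Bmat_sym pn xn \<open>a \<in> set p\<close> by auto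
          then show ?thesis using nz by simp
        next
          case bx: False
          have "before (p @ q) a b" using before_remove[OF dy] bf y False bx by simp
          then show ?thesis using IH nz before_Cons_iff by auto
        qed
      qed
    qed
  qed
qed

lemma omega_simple_eq:
  assumes y: "coxeter_word n y" and y': "coxeter_word n y'" and eq: "ac y = ac y'"
    and ab: "a < n" "b < n"
  shows "omega_simple m y a b = omega_simple m y' a b"
proof (cases "Bmat m a b = 0")
  case True then show ?thesis by (simp add: omega_simple_def)
next
  case False
  have ys: "distinct y" "set y \<subseteq> {..<n}" "distinct y'" "set y' \<subseteq> {..<n}"
    using y y' by (auto simp: coxeter_word_def)
  have o1: "\<forall>a b. Bmat m a b \<noteq> 0 \<longrightarrow> before y a b \<longrightarrow> before y' a b"
    using orient[OF ys(3,4,1,2) eq] by blast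
  have o2: "\<forall>a b. Bmat m a b \<noteq> 0 \<longrightarrow> before y' a b \<longrightarrow> before y a b"
    using orient[OF ys(1,2,3,4) eq[symmetric]] by blast
  have F2: "Bmat m b a \<noteq> 0" using False Bmat_sym ab by simp
  have "before y a b = before y' a b" "before y b a = before y' b a"
    using o1 o2 False F2 by blast+
  then show ?thesis by (simp add: omega_simple_def)
qed

lemma omega_eq:
  assumes "coxeter_word n y" "coxeter_word n y'" "ac y = ac y'"
  shows "omega n m y = omega n m y'"
  unfolding omega_def using omega_simple_eq[OF assms] by (intro ext sum.cong refl) auto

end

context cox
begin

definition bil :: "(nat \<Rightarrow> nat \<Rightarrow> real) \<Rightarrow> (nat \<Rightarrow> real) \<Rightarrow> (nat \<Rightarrow> real) \<Rightarrow> real" where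
  "bil Q u v = (\<Sum>a<n. \<Sum>b<n. u a * v b * Q a b)"

lemma omega_bil: "omega n m y = bil (omega_simple m y)"
  by (simp add: omega_def bil_def fun_eq_iff)

lemma bil_lin_left: "bil Q (\<lambda>i. p * u i + q * w i) v = p * bil Q u v + q * bil Q w v"
  unfolding bil_def by (simp add: algebra_simps sum.distrib sum_distrib_left)

lemma bil_lin_right: "bil Q v (\<lambda>i. p * u i + q * w i) = p * bil Q v u + q * bil Q v w"
  unfolding bil_def by (simp add: algebra_simps sum.distrib sum_distrib_left)

lemma bil_add_O: "bil (\<lambda>a b. O1 a b + O2 a b + O3 a b) u v = bil O1 u v + bil O2 u v + bil O3 u v"
  unfolding bil_def by (simp add: algebra_simps sum.distrib)

lemma bil_cong_O: "(\<And>a b. a < n \<Longrightarrow> b < n \<Longrightarrow> O1 a b = O2 a b) \<Longrightarrow> bil O1 u v = bil O2 u v"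
  unfolding bil_def by (intro sum.cong HOL.refl) auto

lemma bil_e_right: "x < n \<Longrightarrow> bil Q u (e x) = (\<Sum>a<n. u a * Q a x)"
  unfolding bil_def simple_root_def by (simp add: delta_sum)

lemma bil_e_left: "x < n \<Longrightarrow> bil Q (e x) v = (\<Sum>b<n. v b * Q x b)"
proof -
  assume k: "x < n"
  have "bil Q (e x) v = (\<Sum>i<n. (if i = x then 1 else 0) * (\<Sum>j<n. v j * Q i j))"
    unfolding bil_def simple_root_def
    by (simp add: sum_distrib_left mult.assoc)
  then show ?thesis using k by (simp only: delta_sum2)
qed

lemma bil_row: "x < n \<Longrightarrow> bil (\<lambda>a b. if a = x then f b else 0) u v = u x * (\<Sum>b<n. v b * f b)"
proof -
  assume x: "x < n"
  have "bil (\<lambda>a b. if a = x then f b else 0) u v = (\<Sum>a<n. (if a = x then 1 else 0) * (u a * (\<Sum>b<n. v b * f b)))"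
    unfolding bil_def by (intro sum.cong HOL.refl) (auto simp: sum_distrib_left algebra_simps)
  then show ?thesis using x by (simp only: delta_sum2)
qed

lemma bil_col: "x < n \<Longrightarrow> bil (\<lambda>a b. if b = x then g a else 0) u v = v x * (\<Sum>a<n. u a * g a)"
proof -
  assume x: "x < n"
  have "bil (\<lambda>a b. if b = x then g a else 0) u v = (\<Sum>a<n. u a * g a * v x)"
  proof (unfold bil_def, rule sum.cong[OF HOL.refl])
    fix a assume "a \<in> {..<n}"
    have "(\<Sum>b<n. u a * v b * (if b = x then g a else 0)) = (\<Sum>b<n. (if b = x then 1 else 0) * (u a * g a * v b))"
      by (intro sum.cong HOL.refl) auto
    also have "\<dots> = u a * g a * v x" using x by (simp only: delta_sum2)
    finally show "(\<Sum>b<n. u a * v b * (if b = x then g a else 0)) = u a * g a * v x" .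
  qed
  then show ?thesis by (simp add: sum_distrib_left sum_distrib_right algebra_simps)
qed

lemma sum_if_x: "x < n \<Longrightarrow> (\<Sum>b<n. f b * (if b = x then 0 else g b)) = (\<Sum>b<n. f b * g b) - f x * (g x :: real)"
proof -
  assume x: "x < n"
  have "(\<Sum>b<n. f b * (if b = x then 0 else g b)) = (\<Sum>b<n. f b * g b - (if b = x then f b * g b else 0))"
    by (intro sum.cong HOL.refl) auto
  also have "\<dots> = (\<Sum>b<n. f b * g b) - f x * g x" using x by (simp add: sum_subtractf)
  finally show ?thesis .
qed

lemma O1_vals:
  assumes cw: "coxeter_word n (x # z)" and ab: "a < n" "b < n"
  shows "omega_simple m (x # z) x b = (if b = x then 0 else Bmat m x b)"
    and "omega_simple m (x # z) a x = (if a = x then 0 else - Bmat m a x)"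
proof -
  have d: "distinct (x # z)" and st: "set (x # z) = {..<n}" using cw by (auto simp: coxeter_word_def)
  have nb: "\<not> before (x # z) c x" for c
    using before_Cons_iff[of x z c x] before_distinct[of z c x] d by auto
  show "omega_simple m (x # z) x b = (if b = x then 0 else Bmat m x b)"
  proof (cases "b = x")
    case True then show ?thesis using nb by (simp add: omega_simple_def)
  next
    case False
    then have "b \<in> set z" using st ab by auto
    then show ?thesis using False before_Cons_iff by (simp add: omega_simple_def)
  qed
  show "omega_simple m (x # z) a x = (if a = x then 0 else - Bmat m a x)"
  proof (cases "a = x")
    case True then show ?thesis using nb by (simp add: omega_simple_def)
  next
    case False
    then have "a \<in> set z" using st ab by auto
    then show ?thesis using False before_Cons_iff nb by (simp add: omega_simple_def)
  qed
qed

lemma O2_decomp: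
  assumes cw: "coxeter_word n (x # z)" and ab: "a < n" "b < n"
  shows "omega_simple m (z @ [x]) a b = omega_simple m (x # z) a b
     + (if a = x then (if b = x then 0 else -2 * Bmat m x b) else 0)
     + (if b = x then (if a = x then 0 else 2 * Bmat m a x) else 0)"
proof -
  have d: "distinct (x # z)" and st: "set (x # z) = {..<n}" using cw by (auto simp: coxeter_word_def)
  have xz: "x \<notin> set z" using d by simp
  have bz: "before z c c' \<Longrightarrow> c \<in> set z \<and> c' \<in> set z \<and> c \<noteq> c'" for c c'
    using before_distinct[of z c c'] d by auto
  have B1: "before (x # z) c c' \<longleftrightarrow> (c = x \<and> c' \<in> set z) \<or> before z c c'" for c c'
    by (rule before_Cons_iff)
  have B2: "before (z @ [x]) c c' \<longleftrightarrow> (c' = x \<and> c \<in> set z) \<or> before z c c'" for c c'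
    by (rule before_snoc_iff)
  show ?thesis
  proof (cases "a = x")
    case True
    show ?thesis
    proof (cases "b = x")
      case True
      then show ?thesis using \<open>a = x\<close> B1 B2 bz xz by (auto simp: omega_simple_def)
    next
      case False
      then have "b \<in> set z" using st ab by auto
      then show ?thesis using \<open>a = x\<close> False B1 B2 bz xz by (auto simp: omega_simple_def)
    qed
  next
    case False
    then have az: "a \<in> set z" using st ab by auto
    show ?thesis
    proof (cases "b = x")
      case True
      then show ?thesis using False az B1 B2 bz xz by (auto simp: omega_simple_def)
    next
      case bF: False
      have "before (x # z) a b = before (z @ [x]) a b" "before (x # z) b a = before (z @ [x]) b a"
        using B1 B2 False bF by auto
      then show ?thesis using False bF by (simp add: omega_simple_def)
    qed
  qed
qed

lemma omega_shift:
  assumes cw: "coxeter_word n (x # z)"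
  shows "omega n m (x # z) (sr x u) (sr x v) = omega n m (z @ [x]) u v"
proof -
  have xn: "x < n" using cw by (auto simp: coxeter_word_def)
  define O1 where "O1 = omega_simple m (x # z)"
  define Su where "Su = (\<Sum>a<n. u a * Bmat m a x)"
  define Sv where "Sv = (\<Sum>b<n. v b * Bmat m x b)"
  have pu: "B u (e x) = Su" using xn by (simp add: B_e_right Su_def)
  have qv: "B v (e x) = Sv" using xn B_sym[of v "e x"] by (simp add: B_e_left Sv_def)
  have row: "bil O1 (e x) w = (\<Sum>b<n. w b * Bmat m x b) - w x * 2" for w
  proof -
    have "bil O1 (e x) w = (\<Sum>b<n. w b * (if b = x then 0 else Bmat m x b))"
      using xn O1_vals(1)[OF cw] by (simp add: bil_e_left O1_def)
    then show ?thesis using sum_if_x[OF xn] by simp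
  qed
  have col: "bil O1 w (e x) = - ((\<Sum>a<n. w a * Bmat m a x) - w x * 2)" for w
  proof -
    have "bil O1 w (e x) = (\<Sum>a<n. w a * (if a = x then 0 else - Bmat m a x))"
      using xn O1_vals(2)[OF cw] by (simp add: bil_e_right O1_def)
    also have "\<dots> = (\<Sum>a<n. w a * (- Bmat m a x)) - w x * (- Bmat m x x)"
      by (rule sum_if_x[OF xn])
    finally show ?thesis by (simp add: sum_negf)
  qed
  have xx: "bil O1 (e x) (e x) = 0" using row[of "e x"] xn by (simp add: simple_root_def delta_sum2)
  have "bil O1 (sr x u) (sr x v) = 1 * bil O1 u (sr x v) + (- Su) * bil O1 (e x) (sr x v)"
    by (subst sr_alt[of x u], subst pu, rule bil_lin_left)
  also have "bil O1 u (sr x v) = 1 * bil O1 u v + (- Sv) * bil O1 u (e x)"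
    by (subst sr_alt[of x v], subst qv, rule bil_lin_right)
  also have "bil O1 (e x) (sr x v) = 1 * bil O1 (e x) v + (- Sv) * bil O1 (e x) (e x)"
    by (subst sr_alt[of x v], subst qv, rule bil_lin_right)
  finally have L: "bil O1 (sr x u) (sr x v) = bil O1 u v - 2 * Sv * u x + 2 * Su * v x"
    unfolding xx unfolding row col Su_def[symmetric] Sv_def[symmetric] by (simp add: algebra_simps)
  have "omega n m (z @ [x]) u v = bil (\<lambda>a b. O1 a b
     + (if a = x then (if b = x then 0 else -2 * Bmat m x b) else 0)
     + (if b = x then (if a = x then 0 else 2 * Bmat m a x) else 0)) u v"
    unfolding omega_bil O1_def by (rule bil_cong_O) (rule O2_decomp[OF cw])
  also have "\<dots> = bil O1 u v + u x * (\<Sum>b<n. v b * (if b = x then 0 else -2 * Bmat m x b))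
      + v x * (\<Sum>a<n. u a * (if a = x then 0 else 2 * Bmat m a x))"
    unfolding bil_add_O bil_row[OF xn] bil_col[OF xn] ..
  also have "(\<Sum>b<n. v b * (if b = x then 0 else -2 * Bmat m x b)) = -2 * (Sv - v x * 2)"
    unfolding sum_if_x[OF xn] Sv_def by (simp add: sum_distrib_left algebra_simps)
  also have "(\<Sum>a<n. u a * (if a = x then 0 else 2 * Bmat m a x)) = 2 * (Su - u x * 2)"
    unfolding sum_if_x[OF xn] Su_def by (simp add: sum_distrib_left algebra_simps)
  finally have R: "omega n m (z @ [x]) u v = bil O1 u v - 2 * Sv * u x + 2 * Su * v x"
    by (simp add: algebra_simps)
  show ?thesis using L R by (simp add: omega_bil O1_def)
qed

lemma omega_first:
  assumes cw: "coxeter_word n (x # z)"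
  shows "omega n m (x # z) (e x) v = (\<Sum>b<n. v b * Bmat m x b) - v x * 2"
proof -
  have xn: "x < n" using cw by (auto simp: coxeter_word_def)
  have "omega n m (x # z) (e x) v = (\<Sum>b<n. v b * (if b = x then 0 else Bmat m x b))"
    using xn O1_vals(1)[OF cw] by (simp add: bil_e_left omega_bil)
  then show ?thesis using sum_if_x[OF xn] by simp
qed

end

context cox
begin

lemma adm_set: "admissible n m c xs \<Longrightarrow> set xs \<subseteq> {..<n}"
proof (induction xs arbitrary: c)
  case (Cons x xs)
  then obtain y where "coxeter_word n y" "y \<noteq> []" "hd y = x"
    by (auto simp: is_initial_def)
  then have "x < n" by (metis coxeter_word_def hd_in_set lessThan_iff)
  then show ?case using Cons by auto
qed simp

lemma adm_cong: "ceq c c' \<Longrightarrow> admissible n m c xs \<Longrightarrow> admissible n m c' xs"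
proof (induction xs arbitrary: c c')
  case (Cons x xs)
  have "is_initial n m c x" "admissible n m ([x] @ c @ [x]) xs" using Cons.prems by auto
  then obtain y where y: "coxeter_word n y" "y \<noteq> []" "hd y = x" "ceq y c"
    by (auto simp: is_initial_def)
  have "is_initial n m c' x" unfolding is_initial_def
    using y coxeq.trans[OF y(4) Cons.prems(1)] by blast
  moreover have "ceq ([x] @ c @ [x]) ([x] @ c' @ [x])" by (rule ceq_ctx[OF Cons.prems(1)])
  ultimately show ?case using Cons.IH \<open>admissible n m ([x] @ c @ [x]) xs\<close> by simp
qed simp

lemma ell_reduced: "ell w = length w \<Longrightarrow> reduced_word n m w"
  unfolding reduced_word_def using ell_le by fastforce

lemma R_pos:
  assumes red: "reduced_word n m xs" and xs: "set xs \<subseteq> {..<n}" and i: "i < length xs"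
  shows "posv (ac (take i xs) (e (xs ! i)))"
proof -
  define w where "w = take i xs"
  define k where "k = xs ! i"
  have wset: "set w \<subseteq> {..<n}" using xs by (auto simp: w_def dest: in_set_takeD)
  have kn: "k < n" using xs nth_mem[OF i] by (auto simp: k_def)
  have "ell xs = length xs" by (rule reduced_ell[OF red])
  moreover have "xs = take (Suc i) xs @ drop (Suc i) xs" by simp
  ultimately have "ell (take (Suc i) xs) = length (take (Suc i) xs)"
    using ell_red_split[of "take (Suc i) xs" "drop (Suc i) xs"] by simp
  moreover have "take (Suc i) xs = w @ [k]" using i by (simp add: w_def k_def take_Suc_conv_app_nth)
  ultimately have ewk: "ell (w @ [k]) = length w + 1" by simp
  then have "ell w = length w" using ell_red_split[of w "[k]"] by simp
  then have "ell w < ell (w @ [k])" using ewk by simp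
  then show ?thesis using pos_thm[OF HOL.refl wset kn] by (simp add: w_def k_def)
qed

lemma main:
  "coxeter_word n y \<Longrightarrow> admissible n m y xs \<Longrightarrow> reduced_word n m xs \<Longrightarrow> i < j \<Longrightarrow> j < length xs \<Longrightarrow>
   omega n m y (ac (take i xs) (e (xs ! i))) (ac (take j xs) (e (xs ! j))) \<le> 0 \<and>
   (omega n m y (ac (take i xs) (e (xs ! i))) (ac (take j xs) (e (xs ! j))) = 0 \<longrightarrow>
     B (ac (take i xs) (e (xs ! i))) (ac (take j xs) (e (xs ! j))) = 0)"
proof (induction xs arbitrary: y i j)
  case Nil then show ?case by simp
next
  case (Cons x xs')
  note cwy = Cons.prems(1) and adm = Cons.prems(2) and red = Cons.prems(3)
  have init: "is_initial n m y x" and adm': "admissible n m ([x] @ y @ [x]) xs'"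
    using adm by auto
  obtain y0 where y0: "coxeter_word n y0" "y0 \<noteq> []" "hd y0 = x" "ceq y0 y"
    using init by (auto simp: is_initial_def)
  then obtain z where y0z: "y0 = x # z" by (cases y0) auto
  have cw1: "coxeter_word n (x # z)" using y0 y0z by simp
  have sset: "set (x # xs') \<subseteq> {..<n}" by (rule adm_set[OF adm])
  have xn: "x < n" and xs'set: "set xs' \<subseteq> {..<n}" using sset by auto
  have om: "omega n m y = omega n m (x # z)"
    by (rule omega_eq[OF cwy cw1]) (use act_ceq[OF y0(4)] y0z in simp)
  have "ell (x # xs') = length (x # xs')" by (rule reduced_ell[OF red])
  then have "ell ([x] @ xs') = length ([x] @ xs')" by simp
  then have "ell xs' = length xs'" using ell_red_split by blast
  then have red': "reduced_word n m xs'" by (rule ell_reduced)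
  have cw2: "coxeter_word n (z @ [x])" using cw1 by (auto simp: coxeter_word_def)
  have c1: "ceq ([x] @ y @ [x]) ([x] @ (x # z) @ [x])"
    using ceq_ctx[OF coxeq.sym[OF y0(4)], of "[x]" "[x]"] y0z by simp
  have c2: "ceq ([] @ [x, x] @ (z @ [x])) ([] @ (z @ [x]))" by (rule ceq_cancel[OF xn])
  have "ceq ([x] @ y @ [x]) (z @ [x])" using coxeq.trans[OF c1] c2 by simp
  then have adm2: "admissible n m (z @ [x]) xs'" by (rule adm_cong[OF _ adm'])
  define R' where "R' k = ac (take k xs') (e (xs' ! k))" for k
  have RS: "ac (take (Suc k) (x # xs')) (e ((x # xs') ! Suc k)) = sr x (R' k)" for k
    by (simp add: R'_def)
  obtain j' where j: "j = Suc j'" using Cons.prems(4) by (cases j) auto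
  have j'l: "j' < length xs'" using Cons.prems(5) j by simp
  show ?case
  proof (cases i)
    case 0
    have Ri: "ac (take i (x # xs')) (e ((x # xs') ! i)) = e x" using 0 by simp
    define \<beta> where "\<beta> = sr x (R' j')"
    have Rj: "ac (take j (x # xs')) (e ((x # xs') ! j)) = \<beta>" using RS j by (simp add: \<beta>_def)
    have pb: "posv \<beta>" using R_pos[OF red sset Cons.prems(5)] Rj by simp
    have pr: "posv (R' j')" using R_pos[OF red' xs'set j'l] by (simp add: R'_def)
    have w: "omega n m y (e x) \<beta> = (\<Sum>b<n. \<beta> b * (if b = x then 0 else Bmat m x b))"
      unfolding om omega_first[OF cw1] using sum_if_x[OF xn, of \<beta> "Bmat m x"] by simp
    have nonp: "omega n m y (e x) \<beta> \<le> 0"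
      unfolding w
    proof (rule sum_nonpos)
      fix b assume b: "b \<in> {..<n}"
      show "\<beta> b * (if b = x then 0 else Bmat m x b) \<le> 0"
        using pb b Bmat_nonpos[OF xn, of b] by (auto simp: posv_def mult_nonneg_nonpos)
    qed
    have Bx: "B (e x) \<beta> = omega n m y (e x) \<beta> + 2 * \<beta> x"
      unfolding om omega_first[OF cw1] using xn by (simp add: B_e_left)
    have zero: "B (e x) \<beta> = 0" if h: "omega n m y (e x) \<beta> = 0"
    proof -
      have B2: "B \<beta> (e x) = 2 * \<beta> x" using Bx h B_sym[of \<beta> "e x"] by simp
      have "R' j' = sr x \<beta>" using xn by (simp add: \<beta>_def)
      then have "R' j' x = \<beta> x - 2 * \<beta> x" using B2 by (simp add: sref_def)
      then have "\<beta> x \<le> 0" using pr xn by (auto simp: posv_def)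
      moreover have "0 \<le> \<beta> x" using pb xn by (auto simp: posv_def)
      ultimately have "\<beta> x = 0" by simp
      then show ?thesis using Bx h by simp
    qed
    show ?thesis unfolding Ri Rj using nonp zero by simp
  next
    case (Suc i')
    have i'j': "i' < j'" using Cons.prems(4) Suc j by simp
    have IH: "omega n m (z @ [x]) (R' i') (R' j') \<le> 0 \<and>
        (omega n m (z @ [x]) (R' i') (R' j') = 0 \<longrightarrow> B (R' i') (R' j') = 0)"
      using Cons.IH[OF cw2 adm2 red' i'j' j'l] by (simp add: R'_def)
    have eq1: "omega n m y (sr x (R' i')) (sr x (R' j')) = omega n m (z @ [x]) (R' i') (R' j')"
      unfolding om by (rule omega_shift[OF cw1])
    have eq2: "B (sr x (R' i')) (sr x (R' j')) = B (R' i') (R' j')" by (rule sr_inv[OF xn])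
    show ?thesis unfolding Suc j RS eq1 eq2 using IH by simp
  qed
qed

end

theorem lemma8:
  fixes n :: nat and m :: "nat \<Rightarrow> nat \<Rightarrow> enat" and y xs :: "nat list"
  assumes "coxeter_matrix n m"
    and "coxeter_word n y"
    and "admissible n m y xs"
    and "reduced_word n m xs"
    and "i < j" and "j < length xs"
  shows "omega n m y (root_of n m (refl_word xs i)) (root_of n m (refl_word xs j)) \<le> 0
    \<and> (omega n m y (root_of n m (refl_word xs i)) (root_of n m (refl_word xs j)) = 0
         \<longrightarrow> coxeq n m (refl_word xs i @ refl_word xs j) (refl_word xs j @ refl_word xs i))"
proof -
  interpret cox n m using assms(1) by (rule cox.intro)
  have xs: "set xs \<subseteq> {..<n}" by (rule adm_set[OF assms(3)])
  have il: "i < length xs" using assms(5,6) by simp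
  have ri: "root_of n m (refl_word xs i) = ac (take i xs) (e (xs ! i))"
    by (rule root_of_eval[OF assms(4) xs il])
  have rj: "root_of n m (refl_word xs j) = ac (take j xs) (e (xs ! j))"
    by (rule root_of_eval[OF assms(4) xs assms(6)])
  have M: "omega n m y (ac (take i xs) (e (xs ! i))) (ac (take j xs) (e (xs ! j))) \<le> 0 \<and>
   (omega n m y (ac (take i xs) (e (xs ! i))) (ac (take j xs) (e (xs ! j))) = 0 \<longrightarrow>
     B (ac (take i xs) (e (xs ! i))) (ac (take j xs) (e (xs ! j))) = 0)"
    by (rule main[OF assms(2-6)])
  have ws: "set (take i xs) \<subseteq> {..<n}" "set (take j xs) \<subseteq> {..<n}"
    using xs by (auto dest: in_set_takeD)
  have ks: "xs ! i < n" "xs ! j < n" using xs nth_mem[OF il] nth_mem[OF assms(6)] by auto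
  show ?thesis unfolding ri rj
  proof (intro conjI impI)
    show "omega n m y (ac (take i xs) (e (xs ! i))) (ac (take j xs) (e (xs ! j))) \<le> 0" using M by simp
  next
    assume "omega n m y (ac (take i xs) (e (xs ! i))) (ac (take j xs) (e (xs ! j))) = 0"
    then have "B (ac (take i xs) (e (xs ! i))) (ac (take j xs) (e (xs ! j))) = 0" using M by simp
    from commute_of_orth[OF ws(1) ks(1) ws(2) ks(2) this]
    show "coxeq n m (refl_word xs i @ refl_word xs j) (refl_word xs j @ refl_word xs i)"
      by (simp add: refl_word_def)
  qed
qed


end
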